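(* Let $X$ be a real Banach space and $T:X\rightrightarrows X^*$ maximal monotone. The following are equivalent: 1. $D(T)$ is bounded; 2. for every $h\in\mathcal{F}_T$, $P_1(D(h))$ is bounded; 3. there exists $h\in\mathcal{F}_T$ with $P_1(D(h))$ bounded; 4. the functions $h(x,\cdot):X^*\to\mathbb{R}\cup\{\pm\infty\}$, for $h\in\mathcal{F}_T$ lower semicontinuous in the strong$\times$weak-$*$ topology and $x\in P_1D(h)$, are all real-valued and there is $0\leq L<\infty$ with $|h(x,x^* )-h(x,z^* )|\leq L\|x^*-z^*\|$ for all such $h$ and $x$ and all $x^*,z^*\in X^*$; 5. there exists $h\in\mathcal{F}_T$, lower semicontinuous in the strong$\times$weak-$*$ topology, such that the functions $h(x,\cdot)$, $x\in P_1D(h)$, are all real-valued and there is $0\leq L<\infty$ with $|h(x,x^* )-h(x,z^* )|\leq L\|x^*-z^*\|$ for all $x\in P_1D(h)$, $x^*,z^*\in X^*$.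
   Context: An operator $T:X\rightrightarrows X^*$ is a subset of $X\times X^*$, with domain $D(T)$ its projection onto $X$; $T$ is monotone if $\langle x-y,x^*-y^*\rangle\geq0$ for all $(x,x^* ),(y,y^* )\in T$, and maximal monotone if it is monotone and not properly contained in another monotone operator. $\mathcal{F}_T$ is the set of all convex lower semicontinuous (in the norm topology) $h:X\times X^*\to\mathbb{R}\cup\{\pm\infty\}$ with $h(x,x^* )\geq\langle x,x^*\rangle$ for all $(x,x^* )$ and equality on $T$. "Strong$\times$weak-$*$" is the product of the norm topology on $X$ and the weak-$*$ topology on $X^*$. $P_1,P_2$ are the canonical projections of $X\times X^*$ onto $X$ and $X^*$; $D(h)=\{z\;|\;h(z)<\infty\}$. *)

theory Defs
  imports "HOL-Analysis.Analysis"
begin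

text \<open>The dual space X* is modelled as the Banach space of bounded linear
functionals 'a \<Rightarrow>L real; the duality pairing is blinfun_apply.\<close>

definition pairing :: "'a::real_normed_vector \<Rightarrow> ('a \<Rightarrow>\<^sub>L real) \<Rightarrow> real" where
  "pairing x xs = blinfun_apply xs x"

definition monotone_op :: "('a::real_normed_vector \<times> ('a \<Rightarrow>\<^sub>L real)) set \<Rightarrow> bool" where
  "monotone_op T \<longleftrightarrow>
     (\<forall>(x, xs)\<in>T. \<forall>(y, ys)\<in>T. pairing (x - y) (xs - ys) \<ge> 0)"

definition maximal_monotone :: "('a::real_normed_vector \<times> ('a \<Rightarrow>\<^sub>L real)) set \<Rightarrow> bool" where
  "maximal_monotone T \<longleftrightarrow> monotone_op T \<and>
     (\<forall>S. monotone_op S \<and> T \<subseteq> S \<longrightarrow> S = T)"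

definition weak_star_topology :: "('a::real_normed_vector \<Rightarrow>\<^sub>L real) topology" where
  "weak_star_topology =
     topology_generated_by {{f. blinfun_apply f x \<in> U} | x U. open U}"

definition strong_weak_star :: "('a::real_normed_vector \<times> ('a \<Rightarrow>\<^sub>L real)) topology" where
  "strong_weak_star = prod_topology euclidean weak_star_topology"

definition lsc_wrt :: "'b topology \<Rightarrow> ('b \<Rightarrow> ereal) \<Rightarrow> bool" where
  "lsc_wrt Top h \<longleftrightarrow> (\<forall>c::ereal. openin Top {z \<in> topspace Top. c < h z})"

definition ereal_convex :: "('b::real_vector \<Rightarrow> ereal) \<Rightarrow> bool" where
  "ereal_convex h \<longleftrightarrow> convex {(z, t::real). h z \<le> ereal t}"

definition dom_op :: "('a \<times> 'b) set \<Rightarrow> 'a set" where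
  "dom_op T = fst ` T"

definition dom_fun :: "('b \<Rightarrow> ereal) \<Rightarrow> 'b set" where
  "dom_fun h = {z. h z < \<infinity>}"

definition fitz_family ::
  "('a::real_normed_vector \<times> ('a \<Rightarrow>\<^sub>L real)) set \<Rightarrow> ('a \<times> ('a \<Rightarrow>\<^sub>L real) \<Rightarrow> ereal) set" where
  "fitz_family T = {h. ereal_convex h \<and> lsc_wrt euclidean h \<and>
       (\<forall>x xs. h (x, xs) \<ge> ereal (pairing x xs)) \<and>
       (\<forall>(x, xs)\<in>T. h (x, xs) = ereal (pairing x xs))}"

end

theory Submission
  imports Defs
begin


definition sublin :: "('v::real_vector \<Rightarrow> real) \<Rightarrow> bool" where
 "sublin q \<longleftrightarrow> (\<forall>x y. q (x + y) \<le> q x + q y) \<and> (\<forall>c x. 0 \<le> c \<longrightarrow> q (c *\<^sub>R x) = c * q x)"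

lemma sublin_add: "sublin q \<Longrightarrow> q (x + y) \<le> q x + q y"
  unfolding sublin_def by blast

lemma sublin_scale: "sublin q \<Longrightarrow> 0 \<le> c \<Longrightarrow> q (c *\<^sub>R x) = c * q x"
  unfolding sublin_def by blast

lemma sublin_0: "sublin q \<Longrightarrow> q 0 = 0"
  using sublin_scale[of q 0 0] by simp

lemma sublin_lower: "sublin q \<Longrightarrow> - q (-x) \<le> q x"
  using sublin_add[of q x "-x"] sublin_0[of q] by simp

lemma inf_sublin:
  fixes f :: "'v::real_vector \<Rightarrow> real"
  assumes f: "sublin f" and G0: "(0,0) \<in> G"
    and GaddO: "\<forall>d1 c1 d2 c2. (d1,c1) \<in> G \<longrightarrow> (d2,c2) \<in> G \<longrightarrow> (d1 + d2, c1 + c2) \<in> G"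
    and GscO: "\<forall>d c r. (d,c) \<in> G \<longrightarrow> r > 0 \<longrightarrow> (r *\<^sub>R d, r * c) \<in> G"
    and GleO: "\<forall>d c. (d,c) \<in> G \<longrightarrow> c \<le> f d"
  defines "g \<equiv> \<lambda>w. Inf ((\<lambda>(d,c). f (w + d) - c) ` G)"
  shows "sublin g" "\<And>w. g w \<le> f w" "\<And>d c. (d,c) \<in> G \<Longrightarrow> g (-d) \<le> -c"
proof -
  note Gadd = GaddO[rule_format] and Gsc = GscO[rule_format] and Gle = GleO[rule_format]
  have bdd: "bdd_below ((\<lambda>(d,c). f (w + d) - c) ` G)" for w
  proof (rule bdd_belowI[where m="- f (-w)"])
    fix y assume "y \<in> (\<lambda>(d,c). f (w + d) - c) ` G"
    then obtain d c where dc: "(d,c) \<in> G" "y = f (w + d) - c" by auto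
    have "f d \<le> f (w + d) + f (-w)" using sublin_add[OF f, of "w + d" "-w"] by simp
    then show "- f (-w) \<le> y" using Gle[OF dc(1)] dc(2) by simp
  qed
  have low: "g w \<le> f (w + d) - c" if "(d,c) \<in> G" for w d c
    unfolding g_def by (rule cInf_lower[OF _ bdd]) (use that in force)
  have great: "L \<le> g w" if "\<And>d c. (d,c) \<in> G \<Longrightarrow> L \<le> f (w + d) - c" for w L
    unfolding g_def by (rule cInf_greatest) (use G0 that in auto)
  show le: "g w \<le> f w" for w using low[OF G0, of w] by simp
  show "g (-d) \<le> -c" if "(d,c) \<in> G" for d c using low[OF that, of "-d"] sublin_0[OF f] by simp
  show "sublin g" unfolding sublin_def
  proof (intro conjI allI impI)
    fix w1 w2
    have "g (w1 + w2) - g w2 \<le> g w1"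
    proof (rule great)
      fix d1 c1 assume d1: "(d1,c1) \<in> G"
      have "g (w1 + w2) - (f (w1 + d1) - c1) \<le> g w2"
      proof (rule great)
        fix d2 c2 assume d2: "(d2,c2) \<in> G"
        have "g (w1 + w2) \<le> f (w1 + w2 + (d1 + d2)) - (c1 + c2)" using low[OF Gadd[OF d1 d2]] .
        also have "f (w1 + w2 + (d1 + d2)) \<le> f (w1 + d1) + f (w2 + d2)"
          using sublin_add[OF f, of "w1 + d1" "w2 + d2"] by (simp add: algebra_simps)
        finally show "g (w1 + w2) - (f (w1 + d1) - c1) \<le> f (w2 + d2) - c2" by simp
      qed
      then show "g (w1 + w2) - g w2 \<le> f (w1 + d1) - c1" by simp
    qed
    then show "g (w1 + w2) \<le> g w1 + g w2" by simp
  next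
    fix r :: real and w assume r: "0 \<le> r"
    show "g (r *\<^sub>R w) = r * g w"
    proof (cases "r = 0")
      case True
      have "g 0 \<le> 0" using le[of 0] sublin_0[OF f] by simp
      moreover have "0 \<le> g 0"
        by (rule great) (use Gle in simp)
      ultimately show ?thesis using True by simp
    next
      case False
      then have r: "r > 0" using r by simp
      have "g (r *\<^sub>R w) / r \<le> g w"
      proof (rule great)
        fix d c assume dc: "(d,c) \<in> G"
        have "g (r *\<^sub>R w) \<le> f (r *\<^sub>R w + r *\<^sub>R d) - r * c" using low[OF Gsc[OF dc r]] .
        also have "\<dots> = r * (f (w + d) - c)"
          using sublin_scale[OF f, of r "w + d"] r by (simp add: algebra_simps scaleR_add_right)
        finally show "g (r *\<^sub>R w) / r \<le> f (w + d) - c" using r by (simp add: divide_le_eq mult.commute)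
      qed
      moreover have "r * g w \<le> g (r *\<^sub>R w)"
      proof (rule great)
        fix d c assume dc: "(d,c) \<in> G"
        have "g w \<le> f (w + (1/r) *\<^sub>R d) - (1/r) * c" using low[OF Gsc[OF dc, of "1/r"]] r by simp
        also have "\<dots> = (f (r *\<^sub>R w + d) - c) / r"
        proof -
          have "f (w + (1/r) *\<^sub>R d) = f ((1/r) *\<^sub>R (r *\<^sub>R w + d))" using r by (simp add: scaleR_add_right)
          also have "\<dots> = (1/r) * f (r *\<^sub>R w + d)" using sublin_scale[OF f, of "1/r"] r by simp
          finally show ?thesis by (simp add: diff_divide_distrib)
        qed
        finally show "r * g w \<le> f (r *\<^sub>R w + d) - c" using r by (simp add: le_divide_eq mult.commute)
      qed
      ultimately show ?thesis using r by (simp add: divide_le_eq mult.commute)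
    qed
  qed
qed

lemma HB_sublin:
  fixes q :: "'v::real_vector \<Rightarrow> real"
  assumes q: "sublin q"
  shows "\<exists>l. linear l \<and> (\<forall>x. l x \<le> q x)"
proof -
  define A where "A = {f::'v \<Rightarrow> real. sublin f \<and> (\<forall>x. f x \<le> q x)}"
  define P where "P = (\<lambda>(f::'v \<Rightarrow> real) g. \<forall>x. g x \<le> f x)"
  have po: "partial_order_on A (relation_of P A)"
    unfolding partial_order_on_def preorder_on_def refl_on_def trans_on_def antisym_on_def relation_of_def P_def
    by (auto intro: order_trans antisym simp: fun_eq_iff)
  have ch: "\<exists>u\<in>A. \<forall>a\<in>C. P a u" if C: "C \<in> Chains (relation_of P A)" for C
  proof (cases "C = {}")
    case True then show ?thesis using q unfolding A_def by auto
  next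
    case False
    have CA: "C \<subseteq> A" using C unfolding Chains_def relation_of_def by blast
    have tot: "P f1 f2 \<or> P f2 f1" if "f1 \<in> C" "f2 \<in> C" for f1 f2
      using C that unfolding Chains_def relation_of_def by blast
    define u where "u = (\<lambda>x. Inf ((\<lambda>f. f x) ` C))"
    have bdd: "bdd_below ((\<lambda>f. f x) ` C)" for x
    proof (rule bdd_belowI[where m="- q (-x)"])
      fix y assume "y \<in> (\<lambda>f. f x) ` C"
      then obtain f where f: "f \<in> C" "y = f x" by auto
      then have "sublin f" "f (-x) \<le> q (-x)" using CA unfolding A_def by auto
      then show "- q (-x) \<le> y" using sublin_lower[of f x] f by simp
    qed
    have low: "u x \<le> f x" if "f \<in> C" for f x
      unfolding u_def by (rule cInf_lower[OF _ bdd]) (use that in auto)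
    have great: "L \<le> u x" if "\<And>f. f \<in> C \<Longrightarrow> L \<le> f x" for x L
      unfolding u_def by (rule cInf_greatest) (use False that in auto)
    have subl: "sublin f" if "f \<in> C" for f using that CA unfolding A_def by auto
    have "sublin u" unfolding sublin_def
    proof (intro conjI allI impI)
      fix a b
      have "u (a + b) - u b \<le> u a"
      proof (rule great)
        fix f1 assume f1: "f1 \<in> C"
        have "u (a + b) - f1 a \<le> u b"
        proof (rule great)
          fix f2 assume f2: "f2 \<in> C"
          show "u (a + b) - f1 a \<le> f2 b"
          proof (cases "P f1 f2")
            case True
            then have "u (a + b) \<le> f2 a + f2 b" using low[OF f2] sublin_add[OF subl[OF f2]] order_trans by blast
            moreover have "f2 a \<le> f1 a" using True unfolding P_def by blast
            ultimately show ?thesis by linarith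
          next
            case False
            then have "P f2 f1" using tot[OF f1 f2] by blast
            then have "u (a + b) \<le> f1 a + f1 b" using low[OF f1] sublin_add[OF subl[OF f1]] order_trans by blast
            moreover have "f1 b \<le> f2 b" using \<open>P f2 f1\<close> unfolding P_def by blast
            ultimately show ?thesis by linarith
          qed
        qed
        then show "u (a + b) - u b \<le> f1 a" by simp
      qed
      then show "u (a + b) \<le> u a + u b" by simp
    next
      fix r :: real and x assume r: "0 \<le> r"
      show "u (r *\<^sub>R x) = r * u x"
      proof (cases "r = 0")
        case True
        obtain f0 where "f0 \<in> C" using False by auto
        have "u 0 \<le> 0" using low[OF \<open>f0 \<in> C\<close>, of 0] sublin_0[OF subl[OF \<open>f0 \<in> C\<close>]] by simp
        moreover have "0 \<le> u 0" by (rule great) (metis sublin_0 subl order_refl)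
        ultimately show ?thesis using True by simp
      next
        case False
        then have r: "r > 0" using r by simp
        have "u (r *\<^sub>R x) / r \<le> u x"
        proof (rule great)
          fix f assume f: "f \<in> C"
          have "u (r *\<^sub>R x) \<le> r * f x" using low[OF f, of "r *\<^sub>R x"] sublin_scale[OF subl[OF f], of r x] r by simp
          then show "u (r *\<^sub>R x) / r \<le> f x" using r by (simp add: divide_le_eq mult.commute)
        qed
        moreover have "r * u x \<le> u (r *\<^sub>R x)"
        proof (rule great)
          fix f assume f: "f \<in> C"
          have "r * u x \<le> r * f x" using low[OF f] r by simp
          then show "r * u x \<le> f (r *\<^sub>R x)" using sublin_scale[OF subl[OF f]] r by simp
        qed
        ultimately show ?thesis using r by (simp add: divide_le_eq mult.commute)
      qed
    qed
    moreover have "u x \<le> q x" for x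
    proof -
      obtain f0 where f0: "f0 \<in> C" using False by auto
      then have "f0 x \<le> q x" using CA unfolding A_def by blast
      then show ?thesis using low[OF f0, of x] by linarith
    qed
    ultimately have "u \<in> A" unfolding A_def by simp
    moreover have "\<forall>a\<in>C. P a u" unfolding P_def using low by blast
    ultimately show ?thesis by blast
  qed
  have "\<exists>m \<in> A. \<forall>a \<in> A. P m a \<longrightarrow> a = m" using predicate_Zorn[OF po ch] .
  then obtain m where mA: "m \<in> A" and mmin0: "\<forall>a \<in> A. P m a \<longrightarrow> a = m" ..
  have mmin: "a = m" if "a \<in> A" "P m a" for a using mmin0 that by simp
  have msub: "sublin m" and mq: "\<And>x. m x \<le> q x" using mA unfolding A_def by auto
  have neg: "m (-y) \<le> - m y" for y
  proof -
    define G where "G = {(t *\<^sub>R y, t * m y) | t. t \<ge> 0}"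
    define g where "g = (\<lambda>w. Inf ((\<lambda>(d,c). m (w + d) - c) ` G))"
    have mem: "(t *\<^sub>R y, t * m y) \<in> G" if "t \<ge> 0" for t unfolding G_def using that by blast
    have G0: "(0,0) \<in> G" using mem[of 0] by simp
    have Gadd: "(d1 + d2, c1 + c2) \<in> G" if "(d1,c1) \<in> G" "(d2,c2) \<in> G" for d1 c1 d2 c2
    proof -
      note hyp = that
      obtain t1 where "t1 \<ge> 0" "d1 = t1 *\<^sub>R y" "c1 = t1 * m y"
        using hyp(1) unfolding G_def by blast
      moreover obtain t2 where "t2 \<ge> 0" "d2 = t2 *\<^sub>R y" "c2 = t2 * m y"
        using hyp(2) unfolding G_def by blast
      ultimately show ?thesis using mem[of "t1 + t2"] by (simp add: scaleR_add_left distrib_right)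
    qed
    have Gsc: "(r *\<^sub>R d, r * c) \<in> G" if "(d,c) \<in> G" "r > 0" for d c r
    proof -
      note hyp = that
      obtain t where "t \<ge> 0" "d = t *\<^sub>R y" "c = t * m y" using hyp(1) unfolding G_def by blast
      then show ?thesis using mem[of "r * t"] hyp(2) by (simp add: mult.assoc)
    qed
    have Gle: "c \<le> m d" if "(d,c) \<in> G" for d c
    proof -
      note hyp = that
      obtain t where "t \<ge> 0" "d = t *\<^sub>R y" "c = t * m y" using hyp(1) unfolding G_def by blast
      then show ?thesis using sublin_scale[OF msub, of t y] by simp
    qed
    have GaddO: "\<forall>d1 c1 d2 c2. (d1,c1) \<in> G \<longrightarrow> (d2,c2) \<in> G \<longrightarrow> (d1 + d2, c1 + c2) \<in> G" using Gadd by blast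
    have GscO: "\<forall>d c r. (d,c) \<in> G \<longrightarrow> r > 0 \<longrightarrow> (r *\<^sub>R d, r * c) \<in> G" using Gsc by blast
    have GleO: "\<forall>d c. (d,c) \<in> G \<longrightarrow> c \<le> m d" using Gle by blast
    note I0 = inf_sublin[OF msub G0 GaddO GscO GleO]
    have I: "sublin g" "\<And>w. g w \<le> m w" "\<And>d c. (d,c) \<in> G \<Longrightarrow> g (-d) \<le> -c" unfolding g_def using I0 by blast+
    have "g x \<le> q x" for x using I(2)[of x] mq[of x] by linarith
    then have "g \<in> A" using I(1) unfolding A_def by blast
    moreover have "P m g" using I(2) unfolding P_def by blast
    ultimately have gm: "g = m" using mmin by blast
    have "(1 *\<^sub>R y, 1 * m y) \<in> G" using mem[of 1] by simp
    then have "g (- (1 *\<^sub>R y)) \<le> - (1 * m y)" by (rule I(3))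
    then show ?thesis using gm by simp
  qed
  have oddm: "m (-y) = - m y" for y
    using neg[of y] sublin_lower[OF msub, of y] by simp
  have addm: "m (a + b) = m a + m b" for a b
  proof -
    have "m (-a + -b) \<le> m (-a) + m (-b)" using sublin_add[OF msub, of "-a" "-b"] .
    moreover have "-a + -b = -(a + b)" by simp
    ultimately have "- m (a + b) \<le> - m a - m b" using oddm[of "a+b"] oddm[of a] oddm[of b] by simp
    then show ?thesis using sublin_add[OF msub, of a b] by linarith
  qed
  have scm: "m (r *\<^sub>R x) = r * m x" for r x
  proof (cases "r \<ge> 0")
    case True then show ?thesis using sublin_scale[OF msub] by simp
  next
    case False
    have "m (r *\<^sub>R x) = m (- ((-r) *\<^sub>R x))" by simp
    also have "\<dots> = - ((-r) * m x)" using oddm sublin_scale[OF msub, of "-r" x] False by simp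
    finally show ?thesis by simp
  qed
  have "linear m" by (rule linearI) (use addm scm in auto)
  then show ?thesis using mq by blast
qed

lemma HB_sep:
  fixes q :: "'v::real_vector \<Rightarrow> real"
  assumes q: "sublin q" and E: "convex E" "E \<noteq> {}" and far: "\<And>e. e \<in> E \<Longrightarrow> 1 \<le> q (p - e)"
  shows "\<exists>l. linear l \<and> (\<forall>x. l x \<le> q x) \<and> (\<forall>e\<in>E. 1 \<le> l (p - e))"
proof -
  define G where "G = {(s *\<^sub>R (p - e), s) | s e. s \<ge> 0 \<and> e \<in> E}"
  define g where "g = (\<lambda>w. Inf ((\<lambda>(d,c). q (w + d) - c) ` G))"
  obtain e0 where e0: "e0 \<in> E" using E by auto
  have G0: "(0,0) \<in> G" unfolding G_def using e0 by force
  have Gadd: "(d1 + d2, c1 + c2) \<in> G" if "(d1,c1) \<in> G" "(d2,c2) \<in> G" for d1 c1 d2 c2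
  proof -
    note hyp = that
    have "\<exists>s e. s \<ge> 0 \<and> e \<in> E \<and> d1 = s *\<^sub>R (p - e) \<and> c1 = s"
      using hyp(1) unfolding G_def by blast
    then obtain s1 e1 where s1: "s1 \<ge> 0" "e1 \<in> E" "d1 = s1 *\<^sub>R (p - e1)" "c1 = s1"
      by blast
    have "\<exists>s e. s \<ge> 0 \<and> e \<in> E \<and> d2 = s *\<^sub>R (p - e) \<and> c2 = s"
      using hyp(2) unfolding G_def by blast
    then obtain s2 e2 where s2: "s2 \<ge> 0" "e2 \<in> E" "d2 = s2 *\<^sub>R (p - e2)" "c2 = s2"
      by blast
    note s = s1(1) s2(1) s1(2) s2(2) s1(3,4) s2(3,4)
    show ?thesis
    proof (cases "s1 + s2 = 0")
      case True then have "s1 = 0" "s2 = 0" using s by auto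
      then show ?thesis using G0 s by simp
    next
      case False
      then have pos: "s1 + s2 > 0" using s by auto
      define e where "e = (s1 / (s1 + s2)) *\<^sub>R e1 + (s2 / (s1 + s2)) *\<^sub>R e2"
      have "e \<in> E" unfolding e_def
        by (rule convexD[OF E(1) s(3) s(4)]) (use s pos in \<open>auto simp: add_divide_distrib[symmetric]\<close>)
      moreover have "(s1 + s2) *\<^sub>R (p - e) = d1 + d2"
      proof -
        have "(s1 + s2) *\<^sub>R e = ((s1 + s2) * (s1 / (s1 + s2))) *\<^sub>R e1 + ((s1 + s2) * (s2 / (s1 + s2))) *\<^sub>R e2"
          unfolding e_def by (simp add: scaleR_add_right)
        also have "\<dots> = s1 *\<^sub>R e1 + s2 *\<^sub>R e2" using pos by simp
        finally show ?thesis unfolding s by (simp add: algebra_simps)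
      qed
      ultimately show ?thesis unfolding G_def using s pos
        by (auto intro!: exI[of _ "s1 + s2"] exI[of _ e])
    qed
  qed
  have Gsc: "(r *\<^sub>R d, r * c) \<in> G" if "(d,c) \<in> G" "r > 0" for d c r
  proof -
    note hyp = that
    obtain s e where "s \<ge> 0" "e \<in> E" "d = s *\<^sub>R (p - e)" "c = s" using hyp(1) unfolding G_def by blast
    then show ?thesis unfolding G_def using hyp(2)
      by (auto intro!: exI[of _ "r * s"] exI[of _ e])
  qed
  have Gle: "c \<le> q d" if "(d,c) \<in> G" for d c
  proof -
    note hyp = that
    obtain s e where s: "s \<ge> 0" "e \<in> E" "d = s *\<^sub>R (p - e)" "c = s" using hyp unfolding G_def by blast
    then have "s * 1 \<le> s * q (p - e)" using far[OF s(2)] by (intro mult_left_mono) auto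
    then show ?thesis using s sublin_scale[OF q] by simp
  qed
  have GaddO: "\<forall>d1 c1 d2 c2. (d1,c1) \<in> G \<longrightarrow> (d2,c2) \<in> G \<longrightarrow> (d1 + d2, c1 + c2) \<in> G" using Gadd by blast
  have GscO: "\<forall>d c r. (d,c) \<in> G \<longrightarrow> r > 0 \<longrightarrow> (r *\<^sub>R d, r * c) \<in> G" using Gsc by blast
  have GleO: "\<forall>d c. (d,c) \<in> G \<longrightarrow> c \<le> q d" using Gle by blast
  note I0 = inf_sublin[OF q G0 GaddO GscO GleO]
  have I: "sublin g" "\<And>w. g w \<le> q w" "\<And>d c. (d,c) \<in> G \<Longrightarrow> g (-d) \<le> -c" unfolding g_def using I0 by blast+
  obtain l where l: "linear l" "\<And>x. l x \<le> g x" using HB_sublin[OF I(1)] by blast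
  have "\<forall>e\<in>E. 1 \<le> l (p - e)"
  proof
    fix e assume "e \<in> E"
    then have "(1 *\<^sub>R (p - e), 1) \<in> G" unfolding G_def by force
    then have "l (-(p - e)) \<le> -1" using I(3) l(2) by (metis scaleR_one order_trans)
    then show "1 \<le> l (p - e)" using linear_neg[OF l(1), of "p - e"] by linarith
  qed
  then show ?thesis using l I(2) by (meson order_trans)
qed

lemma norming:
  fixes x :: "'a::real_normed_vector"
  shows "\<exists>w::'a \<Rightarrow>\<^sub>L real. norm w \<le> 1 \<and> blinfun_apply w x = norm x"
proof (cases "x = 0")
  case True then show ?thesis by (intro exI[of _ 0]) simp
next
  case False
  have q: "sublin (norm :: 'a \<Rightarrow> real)" unfolding sublin_def by (auto simp: norm_triangle_ineq)
  obtain l where l: "linear l" "\<And>y. l y \<le> norm y" "1 \<le> l (x /\<^sub>R norm x - 0)"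
    using HB_sep[OF q, of "{0}" "x /\<^sub>R norm x"] False by auto
  have ab: "\<bar>l y\<bar> \<le> norm y" for y
    using l(2)[of y] l(2)[of "-y"] linear_neg[OF l(1), of y] by auto
  have bl: "bounded_linear l"
    by (rule bounded_linear_intro[where K=1]) (use l(1) ab in \<open>auto simp: linear_add linear_scale\<close>)
  have "l x = norm x * l (x /\<^sub>R norm x)" using False linear_scale[OF l(1), of "norm x" "x /\<^sub>R norm x"] by simp
  then have "norm x \<le> l x" using l(3) False by simp
  then have "l x = norm x" using l(2)[of x] by simp
  moreover have "norm (Blinfun l) \<le> 1"
    by (rule norm_blinfun_bound) (use ab bl in \<open>auto simp: bounded_linear_Blinfun_apply\<close>)
  ultimately show ?thesis using bl by (intro exI[of _ "Blinfun l"]) (simp add: bounded_linear_Blinfun_apply)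
qed



lemma weak_star_nbhd:
  assumes "openin weak_star_topology W" "xs \<in> W"
  shows "\<exists>F \<delta>. finite F \<and> \<delta> > 0 \<and> {ys. \<forall>u\<in>F. \<bar>blinfun_apply ys u - blinfun_apply xs u\<bar> < \<delta>} \<subseteq> W"
proof -
  have "generate_topology_on {{f. blinfun_apply f x \<in> U} | x U. open U} W"
    using assms(1) unfolding weak_star_topology_def openin_topology_generated_by_iff .
  then show ?thesis using assms(2)
  proof (induction arbitrary: xs)
    case Empty then show ?case by simp
  next
    case (Int a b)
    have xa: "xs \<in> a" and xb: "xs \<in> b" using Int.prems by auto
    obtain F1 d1 where 1: "finite F1" "d1 > 0" "{ys. \<forall>u\<in>F1. \<bar>blinfun_apply ys u - blinfun_apply xs u\<bar> < d1} \<subseteq> a"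
      using Int.IH(1)[OF xa] by blast
    obtain F2 d2 where 2: "finite F2" "d2 > 0" "{ys. \<forall>u\<in>F2. \<bar>blinfun_apply ys u - blinfun_apply xs u\<bar> < d2} \<subseteq> b"
      using Int.IH(2)[OF xb] by blast
    have "{ys. \<forall>u\<in>F1 \<union> F2. \<bar>blinfun_apply ys u - blinfun_apply xs u\<bar> < min d1 d2} \<subseteq> a \<inter> b"
    proof
      fix ys assume "ys \<in> {ys. \<forall>u\<in>F1 \<union> F2. \<bar>blinfun_apply ys u - blinfun_apply xs u\<bar> < min d1 d2}"
      then have "\<forall>u\<in>F1. \<bar>blinfun_apply ys u - blinfun_apply xs u\<bar> < d1"
        "\<forall>u\<in>F2. \<bar>blinfun_apply ys u - blinfun_apply xs u\<bar> < d2" by auto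
      then show "ys \<in> a \<inter> b" using 1(3) 2(3) by blast
    qed
    moreover have "finite (F1 \<union> F2)" "min d1 d2 > 0" using 1 2 by auto
    ultimately show ?case by blast
  next
    case (UN K)
    then obtain k where "k \<in> K" "xs \<in> k" by auto
    with UN.IH[of k xs] show ?case by blast
  next
    case (Basis s)
    then obtain x U where s: "s = {f. blinfun_apply f x \<in> U}" "open U" by auto
    then have "blinfun_apply xs x \<in> U" using Basis by auto
    then obtain e where e: "e > 0" "ball (blinfun_apply xs x) e \<subseteq> U" using s(2) openE by blast
    have "{ys. \<forall>u\<in>{x}. \<bar>blinfun_apply ys u - blinfun_apply xs u\<bar> < e} \<subseteq> s"
    proof
      fix ys assume "ys \<in> {ys. \<forall>u\<in>{x}. \<bar>blinfun_apply ys u - blinfun_apply xs u\<bar> < e}"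
      then have "blinfun_apply ys x \<in> ball (blinfun_apply xs x) e" by (simp add: dist_real_def abs_minus_commute)
      then show "ys \<in> s" using e(2) s(1) by blast
    qed
    then show ?case using e(1) by blast
  qed
qed

lemma weak_star_basic_open:
  "openin weak_star_topology {f. \<bar>blinfun_apply f y - a\<bar> < e}"
proof -
  have "{f. \<bar>blinfun_apply f y - a\<bar> < e} = {f. blinfun_apply f y \<in> ball a e}"
    by (auto simp: dist_real_def abs_minus_commute)
  also have "openin weak_star_topology \<dots>"
    unfolding weak_star_topology_def openin_topology_generated_by_iff
    by (rule generate_topology_on.Basis) blast
  finally show ?thesis .
qed

lemma topspace_weak_star: "topspace weak_star_topology = UNIV"
  unfolding weak_star_topology_def topology_generated_by_topspace by auto

lemma topspace_sws: "topspace strong_weak_star = UNIV"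
  unfolding strong_weak_star_def by (simp add: topspace_weak_star)

lemma sws_nbhd:
  assumes "openin strong_weak_star W" "(x, xs) \<in> W"
  shows "\<exists>F \<delta>. finite F \<and> \<delta> > 0 \<and> (\<forall>y ys. norm (y - x) < \<delta> \<and>
      (\<forall>u\<in>F. \<bar>blinfun_apply ys u - blinfun_apply xs u\<bar> < \<delta>) \<longrightarrow> (y, ys) \<in> W)"
proof -
  have "\<exists>U V. openin euclidean U \<and> openin weak_star_topology V \<and> x \<in> U \<and> xs \<in> V \<and> U \<times> V \<subseteq> W"
    using assms(1) unfolding strong_weak_star_def openin_prod_topology_alt using assms(2) by blast
  then obtain U V where UV0: "openin euclidean U" "openin weak_star_topology V" "x \<in> U" "xs \<in> V" "U \<times> V \<subseteq> W"
    by blast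
  have UV: "open U" "openin weak_star_topology V" "x \<in> U" "xs \<in> V" "U \<times> V \<subseteq> W" using UV0 by simp_all
  obtain d1 where d1: "d1 > 0" "ball x d1 \<subseteq> U" using UV openE by blast
  obtain F d2 where F: "finite F" "d2 > 0" "{ys. \<forall>u\<in>F. \<bar>blinfun_apply ys u - blinfun_apply xs u\<bar> < d2} \<subseteq> V"
    using weak_star_nbhd[OF UV(2,4)] by blast
  show ?thesis
  proof (intro exI[of _ F] exI[of _ "min d1 d2"] conjI allI impI)
    fix y ys assume a: "norm (y - x) < min d1 d2 \<and> (\<forall>u\<in>F. \<bar>blinfun_apply ys u - blinfun_apply xs u\<bar> < min d1 d2)"
    then have "y \<in> U" using d1 by (auto simp: dist_norm norm_minus_commute)
    moreover have "ys \<in> V" using a F(3) by force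
    ultimately show "(y, ys) \<in> W" using UV(5) by auto
  qed (use F d1 in auto)
qed

lemma weak_star_open:
  assumes "openin weak_star_topology W" shows "open W"
proof -
  have "generate_topology_on {{f. blinfun_apply f x \<in> U} | x U. open U} W"
    using assms unfolding weak_star_topology_def openin_topology_generated_by_iff .
  then show ?thesis
  proof induction
    case (Basis s)
    then obtain x U where s: "s = {f. blinfun_apply f x \<in> U}" "open U" by auto
    have "continuous_on UNIV (\<lambda>f::'a \<Rightarrow>\<^sub>L real. blinfun_apply f x)"
      by (intro continuous_intros)
    then show ?case unfolding s(1) using s(2) open_vimage by (metis vimage_def)
  qed auto
qed

lemma sws_open:
  assumes "openin strong_weak_star W" shows "open W"
proof (rule Topological_Spaces.openI)
  fix z assume "z \<in> W"
  then obtain x xs where z: "z = (x, xs)" "(x,xs) \<in> W" by (cases z) auto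
  have "\<exists>U V. openin euclidean U \<and> openin weak_star_topology V \<and> x \<in> U \<and> xs \<in> V \<and> U \<times> V \<subseteq> W"
    using assms unfolding strong_weak_star_def openin_prod_topology_alt using z(2) by blast
  then obtain U V where UV: "openin euclidean U" "openin weak_star_topology V" "x \<in> U" "xs \<in> V" "U \<times> V \<subseteq> W"
    by blast
  show "\<exists>S. open S \<and> z \<in> S \<and> S \<subseteq> W"
  proof (rule exI[of _ "U \<times> V"], intro conjI)
    have "open U" using UV(1) by simp
    then show "open (U \<times> V)" using weak_star_open[OF UV(2)] by (rule open_Times)
    show "z \<in> U \<times> V" using UV z by simp
    show "U \<times> V \<subseteq> W" by (rule UV(5))
  qed
qed

lemma lsc_sws_euclidean:
  assumes "lsc_wrt strong_weak_star h" shows "lsc_wrt euclidean h"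
  using assms sws_open unfolding lsc_wrt_def topspace_sws by auto



lemma pairing_diff_expand:
  "pairing (x - y) (xs - ys) = blinfun_apply xs x - blinfun_apply xs y - blinfun_apply ys x + blinfun_apply ys y"
  unfolding pairing_def by (simp add: blinfun.diff_left blinfun.diff_right)

lemma max_mono_add:
  assumes mm: "maximal_monotone T"
    and rel: "\<And>y ys. (y, ys) \<in> T \<Longrightarrow> 0 \<le> pairing (x - y) (xs - ys)"
  shows "(x, xs) \<in> T"
proof -
  have mon: "monotone_op T" and mx: "\<And>S. monotone_op S \<Longrightarrow> T \<subseteq> S \<Longrightarrow> S = T"
    using mm unfolding maximal_monotone_def by auto
  have sym: "pairing (a - b) (as - bs) = pairing (b - a) (bs - as)" for a b as bs
    unfolding pairing_diff_expand by simp
  have "monotone_op (insert (x, xs) T)"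
    unfolding monotone_op_def
  proof (intro ballI, clarify)
    fix a as b bs assume a: "(a, as) \<in> insert (x, xs) T" and b: "(b, bs) \<in> insert (x, xs) T"
    show "0 \<le> pairing (a - b) (as - bs)"
    proof (cases "(a, as) = (x, xs)")
      case True
      show ?thesis
      proof (cases "(b, bs) = (x, xs)")
        case True then show ?thesis using \<open>(a, as) = (x, xs)\<close> by (simp add: pairing_def)
      next
        case False then have "(b, bs) \<in> T" using b by auto
        then show ?thesis using rel True by auto
      qed
    next
      case False then have aT: "(a, as) \<in> T" using a by auto
      show ?thesis
      proof (cases "(b, bs) = (x, xs)")
        case True
        have "pairing (a - x) (as - xs) = pairing (x - a) (xs - as)" by (rule sym)
        then show ?thesis using rel[OF aT] True by simp
      next
        case False then have "(b, bs) \<in> T" using b by auto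
        then show ?thesis using mon aT unfolding monotone_op_def by auto
      qed
    qed
  qed
  then have "insert (x, xs) T = T" using mx by blast
  then show ?thesis by blast
qed

definition fitz :: "('a::real_normed_vector \<times> ('a \<Rightarrow>\<^sub>L real)) set \<Rightarrow> ('a \<times> ('a \<Rightarrow>\<^sub>L real) \<Rightarrow> ereal)" where
  "fitz T = (\<lambda>(x, xs). SUP (y, ys)\<in>T. ereal (blinfun_apply xs y + blinfun_apply ys x - blinfun_apply ys y))"

lemma fitz_upper:
  "(y, ys) \<in> T \<Longrightarrow> ereal (blinfun_apply xs y + blinfun_apply ys x - blinfun_apply ys y) \<le> fitz T (x, xs)"
  unfolding fitz_def by (auto intro: SUP_upper2)

lemma fitz_ge:
  assumes mm: "maximal_monotone T"
  shows "ereal (pairing x xs) \<le> fitz T (x, xs)"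
proof (rule ccontr)
  assume "\<not> ereal (pairing x xs) \<le> fitz T (x, xs)"
  then have lt: "fitz T (x, xs) < ereal (pairing x xs)" by simp
  have "0 \<le> pairing (x - y) (xs - ys)" if "(y, ys) \<in> T" for y ys
  proof -
    have "ereal (blinfun_apply xs y + blinfun_apply ys x - blinfun_apply ys y) < ereal (pairing x xs)"
      using fitz_upper[OF that, of xs x] lt by (rule le_less_trans)
    then show ?thesis unfolding pairing_diff_expand by (simp add: pairing_def)
  qed
  then have "(x, xs) \<in> T" using max_mono_add[OF mm] by blast
  from fitz_upper[OF this, of xs x] lt show False by (simp add: pairing_def)
qed

lemma fitz_T:
  assumes mm: "maximal_monotone T" and xT: "(x, xs) \<in> T"
  shows "fitz T (x, xs) = ereal (pairing x xs)"
proof (rule antisym)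
  have mon: "monotone_op T" using mm unfolding maximal_monotone_def by auto
  show "fitz T (x, xs) \<le> ereal (pairing x xs)"
    unfolding fitz_def
  proof (simp, rule SUP_least, clarify)
    fix y ys assume yT: "(y, ys) \<in> T"
    have "0 \<le> pairing (x - y) (xs - ys)" using mon xT yT unfolding monotone_op_def by auto
    then show "ereal (blinfun_apply xs y + blinfun_apply ys x - blinfun_apply ys y) \<le> ereal (pairing x xs)"
      unfolding pairing_diff_expand by (simp add: pairing_def)
  qed
  show "ereal (pairing x xs) \<le> fitz T (x, xs)" by (rule fitz_ge[OF mm])
qed

lemma fitz_convex: "ereal_convex (fitz T)"
  unfolding ereal_convex_def
proof (rule convexI)
  fix z1 z2 :: "('a \<times> ('a \<Rightarrow>\<^sub>L real)) \<times> real" and u v :: real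
  assume z1: "z1 \<in> {(z, t). fitz T z \<le> ereal t}" and z2: "z2 \<in> {(z, t). fitz T z \<le> ereal t}"
    and uv: "0 \<le> u" "0 \<le> v" "u + v = 1"
  obtain x xs t1 where z1e: "z1 = ((x, xs), t1)" by (metis prod.collapse)
  obtain x' xs' t2 where z2e: "z2 = ((x', xs'), t2)" by (metis prod.collapse)
  have 1: "fitz T (x, xs) \<le> ereal t1" using z1 z1e by simp
  have 2: "fitz T (x', xs') \<le> ereal t2" using z2 z2e by simp
  have "fitz T (u *\<^sub>R x + v *\<^sub>R x', u *\<^sub>R xs + v *\<^sub>R xs') \<le> ereal (u * t1 + v * t2)"
    unfolding fitz_def
  proof (simp, rule SUP_least, clarify)
    fix y ys assume yT: "(y, ys) \<in> T"
    have a: "blinfun_apply xs y + blinfun_apply ys x - blinfun_apply ys y \<le> t1"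
      using order_trans[OF fitz_upper[OF yT, of xs x] 1] by simp
    have b: "blinfun_apply xs' y + blinfun_apply ys x' - blinfun_apply ys y \<le> t2"
      using order_trans[OF fitz_upper[OF yT, of xs' x'] 2] by simp
    have "blinfun_apply (u *\<^sub>R xs + v *\<^sub>R xs') y + blinfun_apply ys (u *\<^sub>R x + v *\<^sub>R x') - blinfun_apply ys y
        = u * (blinfun_apply xs y + blinfun_apply ys x - blinfun_apply ys y)
          + v * (blinfun_apply xs' y + blinfun_apply ys x' - blinfun_apply ys y)"
    proof -
      have "blinfun_apply ys y = u * blinfun_apply ys y + v * blinfun_apply ys y" using uv(3) by (metis distrib_right mult_1)
      then show ?thesis by (simp add: blinfun.add_left blinfun.scaleR_left blinfun.add_right blinfun.scaleR_right algebra_simps)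
    qed
    also have "\<dots> \<le> u * t1 + v * t2" using a b uv by (intro add_mono mult_left_mono) auto
    finally show "ereal (blinfun_apply (u *\<^sub>R xs + v *\<^sub>R xs') y + blinfun_apply ys (u *\<^sub>R x + v *\<^sub>R x') - blinfun_apply ys y)
        \<le> ereal (u * t1 + v * t2)" by simp
  qed
  then show "u *\<^sub>R z1 + v *\<^sub>R z2 \<in> {(z, t). fitz T z \<le> ereal t}" using z1e z2e by simp
qed

lemma lsc_piece:
  fixes y :: "'a::real_normed_vector" and ys :: "'a \<Rightarrow>\<^sub>L real" and c :: ereal
  shows "openin strong_weak_star {z. c < ereal (blinfun_apply (snd z) y + blinfun_apply ys (fst z) - k)}"
  unfolding strong_weak_star_def openin_prod_topology_alt
proof (intro allI impI)
  fix x0 xs0 assume "(x0, xs0) \<in> {z. c < ereal (blinfun_apply (snd z) y + blinfun_apply ys (fst z) - k)}"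
  then have c0: "c < ereal (blinfun_apply xs0 y + blinfun_apply ys x0 - k)" by simp
  obtain d where d: "c < ereal d" "ereal d < ereal (blinfun_apply xs0 y + blinfun_apply ys x0 - k)"
    using ereal_dense2[OF c0] by blast
  define e where "e = blinfun_apply xs0 y + blinfun_apply ys x0 - k - d"
  have e: "e > 0" using d(2) unfolding e_def by simp
  define U where "U = ball x0 (e / (2 * (norm ys + 1)))"
  define V where "V = {f::'a \<Rightarrow>\<^sub>L real. \<bar>blinfun_apply f y - blinfun_apply xs0 y\<bar> < e / 2}"
  have rpos: "e / (2 * (norm ys + 1)) > 0"
  proof -
    have "0 < norm ys + 1" using norm_ge_zero[of ys] by linarith
    then have "0 < 2 * (norm ys + 1)" by simp
    then show ?thesis by (rule divide_pos_pos[OF e])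
  qed
  have "openin euclidean U" unfolding U_def by simp
  moreover have "openin weak_star_topology V" unfolding V_def by (rule weak_star_basic_open)
  moreover have "x0 \<in> U" unfolding U_def using rpos by simp
  moreover have "xs0 \<in> V" unfolding V_def using e by simp
  moreover have "U \<times> V \<subseteq> {z. c < ereal (blinfun_apply (snd z) y + blinfun_apply ys (fst z) - k)}"
  proof clarify
    fix x xs assume x: "x \<in> U" and xs: "xs \<in> V"
    have np: "norm ys + 1 > 0" by (simp add: add_nonneg_pos)
    have "\<bar>blinfun_apply ys x - blinfun_apply ys x0\<bar> = \<bar>blinfun_apply ys (x - x0)\<bar>"
      by (simp add: blinfun.diff_right)
    also have "\<dots> \<le> norm ys * norm (x - x0)" using norm_blinfun[of ys "x - x0"] by simp
    also have "\<dots> \<le> (norm ys + 1) * norm (x - x0)" by (simp add: mult_right_mono)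
    also have "\<dots> < (norm ys + 1) * (e / (2 * (norm ys + 1)))"
    proof -
      have xd: "norm (x - x0) < e / (2 * (norm ys + 1))" using x unfolding U_def by (simp add: dist_norm norm_minus_commute)
      show ?thesis by (rule mult_strict_left_mono[OF xd np])
    qed
    also have "\<dots> = e / 2" using np by (simp add: field_simps)
    finally have 1: "\<bar>blinfun_apply ys x - blinfun_apply ys x0\<bar> < e / 2" .
    have 2: "\<bar>blinfun_apply xs y - blinfun_apply xs0 y\<bar> < e / 2" using xs unfolding V_def by simp
    have a1: "blinfun_apply ys x0 - blinfun_apply ys x < e / 2"
      using le_less_trans[OF abs_ge_self 1[unfolded abs_minus_commute[of "blinfun_apply ys x" "blinfun_apply ys x0"]]] .
    have a2: "blinfun_apply xs0 y - blinfun_apply xs y < e / 2"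
      using le_less_trans[OF abs_ge_self 2[unfolded abs_minus_commute[of "blinfun_apply xs y" "blinfun_apply xs0 y"]]] .
    have "(blinfun_apply ys x0 - blinfun_apply ys x) + (blinfun_apply xs0 y - blinfun_apply xs y) < e / 2 + e / 2"
      by (rule add_strict_mono[OF a1 a2])
    then have 3: "(blinfun_apply ys x0 - blinfun_apply ys x) + (blinfun_apply xs0 y - blinfun_apply xs y) < e" by simp
    have "d < blinfun_apply xs y + blinfun_apply ys x - k" using 3 e_def by linarith
    then show "c < ereal (blinfun_apply (snd (x, xs)) y + blinfun_apply ys (fst (x, xs)) - k)"
      using d(1) by (simp add: order_less_trans)
  qed
  ultimately show "\<exists>U V. openin euclidean U \<and> openin weak_star_topology V \<and> x0 \<in> U \<and> xs0 \<in> V \<and>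
      U \<times> V \<subseteq> {z. c < ereal (blinfun_apply (snd z) y + blinfun_apply ys (fst z) - k)}"
    by (intro exI[of _ U] exI[of _ V] conjI)
qed

lemma fitz_lsc: "lsc_wrt strong_weak_star (fitz T)"
  unfolding lsc_wrt_def topspace_sws
proof
  fix c :: ereal
  have eq: "{z \<in> UNIV. c < fitz T z} =
      \<Union> ((\<lambda>(y, ys). {z. c < ereal (blinfun_apply (snd z) y + blinfun_apply ys (fst z) - blinfun_apply ys y)}) ` T)"
    unfolding fitz_def by (auto simp: less_SUP_iff case_prod_beta)
  show "openin strong_weak_star {z \<in> UNIV. c < fitz T z}"
    unfolding eq by (rule openin_Union) (auto simp: lsc_piece)
qed

lemma fitz_family_fitz:
  assumes "maximal_monotone T" shows "fitz T \<in> fitz_family T"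
  unfolding fitz_family_def
  using fitz_convex lsc_sws_euclidean[OF fitz_lsc] fitz_ge[OF assms] fitz_T[OF assms] by auto

lemma lin_helper: fixes P X Y :: real shows "P \<le> X \<Longrightarrow> Y \<le> P / 2 \<Longrightarrow> X \<le> Y \<Longrightarrow> 0 < P \<Longrightarrow> False"
  by linarith

lemma family_ge_fitz_term:
  assumes h: "h \<in> fitz_family T" and yT: "(y, ys) \<in> T"
  shows "ereal (blinfun_apply xs y + blinfun_apply ys x - blinfun_apply ys y) \<le> h (x, xs)"
proof (cases "h (x, xs) = \<infinity>")
  case True then show ?thesis by simp
next
  case False
  have cv: "convex {(z, t). h z \<le> ereal t}" and ge: "\<And>x xs. h (x, xs) \<ge> ereal (pairing x xs)"
    and eqT: "\<And>x xs. (x, xs) \<in> T \<Longrightarrow> h (x, xs) = ereal (pairing x xs)"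
    using h unfolding fitz_family_def ereal_convex_def by auto
  have "h (x, xs) \<noteq> - \<infinity>" using ge[of x xs] by auto
  then obtain r where r: "h (x, xs) = ereal r" using False by (cases "h (x, xs)") auto
  define a where "a = blinfun_apply ys y"
  define b where "b = blinfun_apply ys x + blinfun_apply xs y"
  define dd where "dd = blinfun_apply xs x"
  have key: "(1 - t) * (b - a) + t * dd \<le> r" if t: "0 < t" "t < 1" for t
  proof -
    have m1: "((y, ys), a) \<in> {(z, t). h z \<le> ereal t}" using eqT[OF yT] unfolding a_def pairing_def by simp
    have m2: "((x, xs), r) \<in> {(z, t). h z \<le> ereal t}" using r by simp
    have "(1 - t) *\<^sub>R ((y, ys), a) + t *\<^sub>R ((x, xs), r) \<in> {(z, t). h z \<le> ereal t}"
      using convexD[OF cv m1 m2, of "1 - t" t] t by simp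
    then have hm: "h ((1 - t) *\<^sub>R y + t *\<^sub>R x, (1 - t) *\<^sub>R ys + t *\<^sub>R xs) \<le> ereal ((1 - t) * a + t * r)"
      by simp
    have "pairing ((1 - t) *\<^sub>R y + t *\<^sub>R x) ((1 - t) *\<^sub>R ys + t *\<^sub>R xs)
        = (1 - t) * (1 - t) * a + (1 - t) * t * b + t * t * dd"
      unfolding pairing_def a_def b_def dd_def blinfun.add_left blinfun.scaleR_left blinfun.add_right blinfun.scaleR_right
      by (simp add: algebra_simps)
    moreover have "ereal (pairing ((1 - t) *\<^sub>R y + t *\<^sub>R x) ((1 - t) *\<^sub>R ys + t *\<^sub>R xs)) \<le> ereal ((1 - t) * a + t * r)"
      by (rule order_trans[OF ge hm])
    ultimately have "(1 - t) * (1 - t) * a + (1 - t) * t * b + t * t * dd \<le> (1 - t) * a + t * r"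
      by simp
    then have "t * ((1 - t) * (b - a) + t * dd) \<le> t * r" by (simp add: algebra_simps)
    then show ?thesis using t by simp
  qed
  have "b - a \<le> r"
  proof (rule ccontr)
    assume "\<not> b - a \<le> r"
    then have pos: "b - a - r > 0" by simp
    define K where "K = \<bar>b - a - dd\<bar> + 1"
    have K: "K > 0" unfolding K_def by simp
    define t where "t = min (1/2) ((b - a - r) / (2 * K))"
    have t: "0 < t" "t < 1" unfolding t_def using pos K by auto
    have "t \<le> (b - a - r) / (2 * K)" unfolding t_def by simp
    then have "t * K \<le> (b - a - r) / (2 * K) * K" using K by (intro mult_right_mono) auto
    also have "\<dots> = (b - a - r) / 2" using K by simp
    finally have "t * K \<le> (b - a - r) / 2" .
    moreover have "t * (b - a - dd) \<le> t * K" using t unfolding K_def by (intro mult_left_mono) auto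
    moreover have "(1 - t) * (b - a) + t * dd = (b - a) - t * (b - a - dd)" by (simp add: algebra_simps)
    ultimately have "b - a - r \<le> t * (b - a - dd)" using key[OF t] by linarith
    then show False using lin_helper[OF _ \<open>t * K \<le> (b - a - r) / 2\<close> \<open>t * (b - a - dd) \<le> t * K\<close> pos] by blast
  qed
  then show ?thesis using r unfolding a_def b_def by simp
qed



lemma fd_eval:
  fixes l :: "('a::real_normed_vector \<Rightarrow>\<^sub>L real) \<Rightarrow> real"
  assumes "finite F"
  shows "linear l \<Longrightarrow> (\<And>ys. (\<forall>u\<in>F. blinfun_apply ys u = 0) \<Longrightarrow> l ys = 0) \<Longrightarrow> \<exists>v. \<forall>ys. l ys = blinfun_apply ys v"
  using assms
proof (induction F arbitrary: l rule: finite_induct)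
  case empty
  then show ?case by (intro exI[of _ 0]) (simp add: blinfun.zero_right)
next
  case (insert a F)
  show ?case
  proof (cases "\<exists>z::'a \<Rightarrow>\<^sub>L real. (\<forall>u\<in>F. blinfun_apply z u = 0) \<and> blinfun_apply z a = 1")
    case True
    then obtain z :: "'a \<Rightarrow>\<^sub>L real" where z: "\<forall>u\<in>F. blinfun_apply z u = 0" "blinfun_apply z a = 1" by blast
    define M where "M = (\<lambda>ys::'a \<Rightarrow>\<^sub>L real. ys - blinfun_apply ys a *\<^sub>R z)"
    have linM: "linear M"
      by (rule linearI) (simp_all add: M_def blinfun.bilinear_simps algebra_simps scaleR_add_left)
    have linl': "linear (l \<circ> M)" by (rule linear_compose[OF linM insert.prems(1)])
    have ker: "(l \<circ> M) ys = 0" if "\<forall>u\<in>F. blinfun_apply ys u = 0" for ys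
    proof -
      have "\<forall>u\<in>insert a F. blinfun_apply (M ys) u = 0"
        using that z unfolding M_def by (simp add: blinfun.bilinear_simps)
      then show ?thesis using insert.prems(2) by simp
    qed
    obtain v' where v': "\<forall>ys. (l \<circ> M) ys = blinfun_apply ys v'" using insert.IH[OF linl' ker] by blast
    show ?thesis
    proof (intro exI[of _ "v' + l z *\<^sub>R a"] allI)
      fix ys
      have "ys = M ys + blinfun_apply ys a *\<^sub>R z" unfolding M_def by simp
      then have "l ys = l (M ys) + blinfun_apply ys a * l z"
        using linear_add[OF insert.prems(1)] linear_scale[OF insert.prems(1)] by (metis real_scaleR_def)
      also have "\<dots> = blinfun_apply ys v' + blinfun_apply ys a * l z" using v' by simp
      also have "\<dots> = blinfun_apply ys (v' + l z *\<^sub>R a)" by (simp add: blinfun.bilinear_simps)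
      finally show "l ys = blinfun_apply ys (v' + l z *\<^sub>R a)" .
    qed
  next
    case False
    have ker: "l ys = 0" if h: "\<forall>u\<in>F. blinfun_apply ys u = 0" for ys
    proof -
      have "blinfun_apply ys a = 0"
      proof (rule ccontr)
        assume ne: "blinfun_apply ys a \<noteq> 0"
        have "(\<forall>u\<in>F. blinfun_apply ((1 / blinfun_apply ys a) *\<^sub>R ys) u = 0) \<and>
            blinfun_apply ((1 / blinfun_apply ys a) *\<^sub>R ys) a = 1"
          using h ne by (simp add: blinfun.bilinear_simps)
        then show False using False by blast
      qed
      then have "\<forall>u\<in>insert a F. blinfun_apply ys u = 0" using h by simp
      then show ?thesis by (rule insert.prems(2))
    qed
    show ?thesis by (rule insert.IH[OF insert.prems(1) ker])
  qed
qed

lemma sep_sws: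
  fixes h :: "'a::real_normed_vector \<times> ('a \<Rightarrow>\<^sub>L real) \<Rightarrow> ereal"
  assumes lsc: "lsc_wrt strong_weak_star h" and cv: "ereal_convex h"
    and ne: "h (x1, xs1) < \<infinity>" and t: "ereal t < h (x0, xs0)"
  shows "\<exists>(u::'a \<Rightarrow>\<^sub>L real) (v::'a) (A::real). \<forall>y ys s. h (y, ys) \<le> ereal s \<longrightarrow>
           1 \<le> blinfun_apply u (x0 - y) + blinfun_apply (xs0 - ys) v + A * (t - s)"
proof -
  obtain c where c: "ereal t < ereal c" "ereal c < h (x0, xs0)" using ereal_dense2[OF t] by blast
  have tc: "t < c" using c(1) by simp
  define W where "W = {z. ereal c < h z}"
  have "openin strong_weak_star {z \<in> topspace strong_weak_star. ereal c < h z}"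
    using lsc unfolding lsc_wrt_def by blast
  then have Wo: "openin strong_weak_star W" unfolding topspace_sws W_def by simp
  have x0W: "(x0, xs0) \<in> W" using c(2) unfolding W_def by simp
  obtain F \<delta> where F: "finite F" "\<delta> > 0" and nb0: "\<forall>y ys. norm (y - x0) < \<delta> \<and>
      (\<forall>u\<in>F. \<bar>blinfun_apply ys u - blinfun_apply xs0 u\<bar> < \<delta>) \<longrightarrow> (y, ys) \<in> W"
    using sws_nbhd[OF Wo x0W] by blast
  define g where "g = c - t"
  have g: "g > 0" unfolding g_def using tc by simp
  define q :: "(('a \<times> ('a \<Rightarrow>\<^sub>L real)) \<times> real) \<Rightarrow> real" where
    "q = (\<lambda>w. norm (fst (fst w)) / \<delta> + (\<Sum>u\<in>F. \<bar>blinfun_apply (snd (fst w)) u\<bar>) / \<delta> + \<bar>snd w\<bar> / g)"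
  have subl: "sublin q"
    unfolding sublin_def
  proof (intro conjI allI impI)
    fix a b :: "(('a \<times> ('a \<Rightarrow>\<^sub>L real)) \<times> real)"
    have 1: "norm (fst (fst (a + b))) \<le> norm (fst (fst a)) + norm (fst (fst b))" by (simp add: norm_triangle_ineq)
    have 2: "(\<Sum>u\<in>F. \<bar>blinfun_apply (snd (fst (a + b))) u\<bar>)
        \<le> (\<Sum>u\<in>F. \<bar>blinfun_apply (snd (fst a)) u\<bar>) + (\<Sum>u\<in>F. \<bar>blinfun_apply (snd (fst b)) u\<bar>)"
      unfolding sum.distrib[symmetric] by (rule sum_mono) (simp add: blinfun.add_left abs_triangle_ineq)
    have 3: "\<bar>snd (a + b)\<bar> \<le> \<bar>snd a\<bar> + \<bar>snd b\<bar>" by (simp add: abs_triangle_ineq)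
    have d1: "norm (fst (fst (a + b))) / \<delta> \<le> norm (fst (fst a)) / \<delta> + norm (fst (fst b)) / \<delta>"
      using divide_right_mono[OF 1, of \<delta>] F(2) by (simp add: add_divide_distrib)
    have d2: "(\<Sum>u\<in>F. \<bar>blinfun_apply (snd (fst (a + b))) u\<bar>) / \<delta>
        \<le> (\<Sum>u\<in>F. \<bar>blinfun_apply (snd (fst a)) u\<bar>) / \<delta> + (\<Sum>u\<in>F. \<bar>blinfun_apply (snd (fst b)) u\<bar>) / \<delta>"
      using divide_right_mono[OF 2, of \<delta>] F(2) by (simp add: add_divide_distrib)
    have d3: "\<bar>snd (a + b)\<bar> / g \<le> \<bar>snd a\<bar> / g + \<bar>snd b\<bar> / g"
      using divide_right_mono[OF 3, of g] g by (simp add: add_divide_distrib)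
    show "q (a + b) \<le> q a + q b" unfolding q_def using d1 d2 d3 by linarith
  next
    fix r :: real and a :: "(('a \<times> ('a \<Rightarrow>\<^sub>L real)) \<times> real)" assume r: "0 \<le> r"
    have e1: "norm (fst (fst (r *\<^sub>R a))) = r * norm (fst (fst a))" using r by simp
    have e2: "(\<Sum>u\<in>F. \<bar>blinfun_apply (snd (fst (r *\<^sub>R a))) u\<bar>) = r * (\<Sum>u\<in>F. \<bar>blinfun_apply (snd (fst a)) u\<bar>)"
      using r by (simp add: blinfun.scaleR_left abs_mult sum_distrib_left)
    have e3: "\<bar>snd (r *\<^sub>R a)\<bar> = r * \<bar>snd a\<bar>" using r by (simp add: abs_mult)
    show "q (r *\<^sub>R a) = r * q a" unfolding q_def e1 e2 e3 by (simp add: distrib_left)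
  qed
  define E where "E = {(z, s). h z \<le> ereal s}"
  have Ecv: "convex E" using cv unfolding ereal_convex_def E_def .
  obtain s1 where s1: "h (x1, xs1) \<le> ereal s1"
  proof (cases "h (x1, xs1)")
    case (real r) then show ?thesis using that[of r] by simp
  next
    case PInf then show ?thesis using ne by simp
  next
    case MInf then show ?thesis using that[of 0] by simp
  qed
  have Ene: "E \<noteq> {}" using s1 unfolding E_def by blast
  define p where "p = ((x0, xs0), t)"
  have far: "1 \<le> q (p - e)" if eE: "e \<in> E" for e
  proof (rule ccontr)
    obtain y ys s where e: "e = ((y, ys), s)" by (metis prod.collapse)
    have hs: "h (y, ys) \<le> ereal s" using eE e unfolding E_def by simp
    assume "\<not> 1 \<le> q (p - e)"
    then have lt: "norm (x0 - y) / \<delta> + (\<Sum>u\<in>F. \<bar>blinfun_apply (xs0 - ys) u\<bar>) / \<delta> + \<bar>t - s\<bar> / g < 1"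
      unfolding q_def p_def e by simp
    have n1: "0 \<le> norm (x0 - y) / \<delta>" using F(2) by simp
    have n2: "0 \<le> (\<Sum>u\<in>F. \<bar>blinfun_apply (xs0 - ys) u\<bar>) / \<delta>" using F(2) by (simp add: sum_nonneg)
    have n3: "0 \<le> \<bar>t - s\<bar> / g" using g by simp
    have "norm (x0 - y) / \<delta> < 1" using lt n2 n3 by linarith
    then have a1: "norm (y - x0) < \<delta>" using F(2) by (simp add: norm_minus_commute divide_less_eq)
    have "(\<Sum>u\<in>F. \<bar>blinfun_apply (xs0 - ys) u\<bar>) / \<delta> < 1" using lt n1 n3 by linarith
    then have S: "(\<Sum>u\<in>F. \<bar>blinfun_apply (xs0 - ys) u\<bar>) < \<delta>" using F(2) by (simp add: divide_less_eq)
    have a2: "\<forall>u\<in>F. \<bar>blinfun_apply ys u - blinfun_apply xs0 u\<bar> < \<delta>"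
    proof
      fix u assume u: "u \<in> F"
      have "\<bar>blinfun_apply (xs0 - ys) u\<bar> \<le> (\<Sum>u\<in>F. \<bar>blinfun_apply (xs0 - ys) u\<bar>)"
        by (rule member_le_sum[OF u _ F(1)]) simp
      moreover have "\<bar>blinfun_apply (xs0 - ys) u\<bar> = \<bar>blinfun_apply ys u - blinfun_apply xs0 u\<bar>"
        by (simp add: blinfun.diff_left abs_minus_commute)
      ultimately show "\<bar>blinfun_apply ys u - blinfun_apply xs0 u\<bar> < \<delta>" using S by linarith
    qed
    have "\<bar>t - s\<bar> / g < 1" using lt n1 n2 by linarith
    then have "\<bar>t - s\<bar> < g" using g by (simp add: divide_less_eq)
    moreover have "-(t - s) \<le> \<bar>t - s\<bar>" by (rule abs_ge_minus_self)
    ultimately have sc: "s < c" unfolding g_def by linarith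
    have "(y, ys) \<in> W" using nb0 a1 a2 by blast
    then have "ereal c < h (y, ys)" unfolding W_def by simp
    then have "ereal c < ereal s" using hs by (rule less_le_trans)
    then show False using sc by simp
  qed
  have "\<exists>l. linear l \<and> (\<forall>x. l x \<le> q x) \<and> (\<forall>e\<in>E. 1 \<le> l (p - e))"
  proof (rule HB_sep[OF subl Ecv Ene])
    fix e assume "e \<in> E" then show "1 \<le> q (p - e)" by (rule far)
  qed
  then obtain l where l: "linear l" "\<forall>x. l x \<le> q x" "\<forall>e\<in>E. 1 \<le> l (p - e)" by blast
  define l1 where "l1 = (\<lambda>y. l ((y, 0), 0))"
  define l2 where "l2 = (\<lambda>ys. l ((0, ys), 0))"
  define A where "A = l ((0, 0), 1)"
  have decomp: "l ((y, ys), s) = l1 y + l2 ys + s * A" for y ys s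
  proof -
    have eq: "((y, ys), s) = ((y, 0), 0) + ((0, ys), 0) + s *\<^sub>R ((0, 0), 1)" by simp
    have "l (((y, 0), 0) + ((0, ys), 0) + s *\<^sub>R ((0, 0), 1)) = l ((y, 0), 0) + l ((0, ys), 0) + s * l ((0, 0), 1)"
      unfolding linear_add[OF l(1)] linear_scale[OF l(1)] by simp
    then show ?thesis unfolding l1_def l2_def A_def eq[symmetric] .
  qed
  have l1lin: "linear l1"
  proof (rule linearI)
    fix a b show "l1 (a + b) = l1 a + l1 b" unfolding l1_def using linear_add[OF l(1), of "((a, 0), 0)" "((b, 0), 0)"] by simp
  next
    fix r a show "l1 (r *\<^sub>R a) = r *\<^sub>R l1 a" unfolding l1_def using linear_scale[OF l(1), of r "((a, 0), 0)"] by simp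
  qed
  have l2lin: "linear l2"
  proof (rule linearI)
    fix a b show "l2 (a + b) = l2 a + l2 b" unfolding l2_def using linear_add[OF l(1), of "((0, a), 0)" "((0, b), 0)"] by simp
  next
    fix r a show "l2 (r *\<^sub>R a) = r *\<^sub>R l2 a" unfolding l2_def using linear_scale[OF l(1), of r "((0, a), 0)"] by simp
  qed
  have l1b: "l1 y \<le> norm y / \<delta>" for y
    using l(2)[rule_format, of "((y, 0), 0)"] unfolding l1_def q_def by (simp add: blinfun.zero_left)
  have l1abs: "norm (l1 y) \<le> norm y * (1 / \<delta>)" for y
  proof -
    have "- l1 y = l1 (- y)" using linear_neg[OF l1lin, of y] by simp
    then have "- l1 y \<le> norm y / \<delta>" using l1b[of "-y"] by simp
    then show ?thesis using l1b[of y] by (simp add: abs_le_iff)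
  qed
  have bl1: "bounded_linear l1"
    by (rule bounded_linear_intro[where K="1 / \<delta>"]) (use l1lin l1abs in \<open>auto simp: linear_add linear_scale\<close>)
  have ker: "l2 ys = 0" if "\<forall>u\<in>F. blinfun_apply ys u = 0" for ys
  proof -
    have qz: "q ((0, zs), 0) = 0" if "\<forall>u\<in>F. blinfun_apply zs u = 0" for zs
      unfolding q_def using that by simp
    have "l2 ys \<le> 0" using l(2)[rule_format, of "((0, ys), 0)"] qz[OF that] unfolding l2_def by simp
    moreover have "l2 (- ys) \<le> 0"
      using l(2)[rule_format, of "((0, - ys), 0)"] qz[of "- ys"] that unfolding l2_def by (simp add: blinfun.minus_left)
    moreover have "l2 (- ys) = - l2 ys" by (rule linear_neg[OF l2lin])
    ultimately show ?thesis by linarith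
  qed
  obtain v where v: "\<forall>ys. l2 ys = blinfun_apply ys v" using fd_eval[OF F(1) l2lin ker] by blast
  show ?thesis
  proof (intro exI[of _ "Blinfun l1"] exI[of _ v] exI[of _ A] allI impI)
    fix y ys s assume hs: "h (y, ys) \<le> ereal s"
    then have "((y, ys), s) \<in> E" unfolding E_def by simp
    then have "1 \<le> l (p - ((y, ys), s))" using l(3) by blast
    also have "p - ((y, ys), s) = ((x0 - y, xs0 - ys), t - s)" unfolding p_def by simp
    also have "l ((x0 - y, xs0 - ys), t - s) = l1 (x0 - y) + l2 (xs0 - ys) + (t - s) * A" by (rule decomp)
    finally show "1 \<le> blinfun_apply (Blinfun l1) (x0 - y) + blinfun_apply (xs0 - ys) v + A * (t - s)"
      using v bl1 by (simp add: bounded_linear_Blinfun_apply mult.commute)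
  qed
qed



lemma nonvert_sep:
  fixes h :: "'a::real_normed_vector \<times> ('a \<Rightarrow>\<^sub>L real) \<Rightarrow> ereal"
  assumes lsc: "lsc_wrt strong_weak_star h" and cv: "ereal_convex h"
    and fin: "h (x, zs) = ereal r" and t: "ereal t < h (x, xs)"
  shows "\<exists>(U::'a \<Rightarrow>\<^sub>L real) (w::'a). \<forall>y ys s. h (y, ys) \<le> ereal s \<longrightarrow>
           0 < blinfun_apply U (x - y) + blinfun_apply (xs - ys) w - t + s"
proof -
  have ne: "h (x, zs) < \<infinity>" using fin by simp
  obtain u v A where s1: "\<forall>y ys s. h (y, ys) \<le> ereal s \<longrightarrow>
      1 \<le> blinfun_apply u (x - y) + blinfun_apply (xs - ys) v + A * (t - s)"
    using sep_sws[OF lsc cv ne t] by blast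
  have t2: "ereal (r - 1) < h (x, zs)" using fin by simp
  obtain u' v' A' where s2: "\<forall>y ys s. h (y, ys) \<le> ereal s \<longrightarrow>
      1 \<le> blinfun_apply u' (x - y) + blinfun_apply (zs - ys) v' + A' * ((r - 1) - s)"
    using sep_sws[OF lsc cv ne t2] by blast
  have hr: "h (x, zs) \<le> ereal r" using fin by simp
  have A': "A' \<le> -1" using s2[rule_format, OF hr] by (simp add: blinfun.bilinear_simps)
  have A: "A \<le> 0"
  proof (rule ccontr)
    assume "\<not> A \<le> 0"
    then have Ap: "A > 0" by simp
    define M where "M = \<bar>blinfun_apply (xs - zs) v\<bar> + 1"
    define s where "s = max r (t + M / A)"
    have "h (x, zs) \<le> ereal s" using fin unfolding s_def by simp
    then have i: "1 \<le> blinfun_apply (xs - zs) v + A * (t - s)"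
      using s1[rule_format, of x zs s] by (simp add: blinfun.bilinear_simps)
    have "t + M / A \<le> s" unfolding s_def by simp
    then have "A * (t + M / A) \<le> A * s" using Ap by (intro mult_left_mono) auto
    then have "A * t + M \<le> A * s" using Ap by (simp add: distrib_left)
    then have "A * (t - s) \<le> - M" by (simp add: right_diff_distrib)
    moreover have "blinfun_apply (xs - zs) v \<le> \<bar>blinfun_apply (xs - zs) v\<bar>" by simp
    ultimately show False using i unfolding M_def by linarith
  qed
  define K where "K = blinfun_apply (xs - zs) v' + A' * (t - r + 1)"
  define mu where "mu = 1 / (2 * (\<bar>1 + K\<bar> + 1))"
  have mu: "mu > 0"
  proof -
    have "0 < \<bar>1 + K\<bar> + 1" using abs_ge_zero[of "1 + K"] by linarith
    then have "0 < 2 * (\<bar>1 + K\<bar> + 1)" by simp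
    then show ?thesis unfolding mu_def by simp
  qed
  have muK: "mu * \<bar>1 + K\<bar> \<le> 1 / 2"
  proof -
    have "\<bar>1 + K\<bar> \<le> \<bar>1 + K\<bar> + 1" by simp
    then have "\<bar>1 + K\<bar> / (2 * (\<bar>1 + K\<bar> + 1)) \<le> (\<bar>1 + K\<bar> + 1) / (2 * (\<bar>1 + K\<bar> + 1))"
      by (intro divide_right_mono) auto
    also have "\<dots> = 1 / 2"
    proof -
      have "0 < \<bar>1 + K\<bar> + 1" using abs_ge_zero[of "1 + K"] by linarith
      then show ?thesis by simp
    qed
    finally show ?thesis unfolding mu_def by simp
  qed
  define lam where "lam = - (A + mu * A')"
  have "mu * A' \<le> mu * (-1)" using A' mu by (intro mult_left_mono) auto
  then have lam: "lam > 0" unfolding lam_def using A mu by linarith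
  define U where "U = (1 / lam) *\<^sub>R (u + mu *\<^sub>R u')"
  define w where "w = (1 / lam) *\<^sub>R (v + mu *\<^sub>R v')"
  show ?thesis
  proof (intro exI[of _ U] exI[of _ w] allI impI)
    fix y ys s assume hs: "h (y, ys) \<le> ereal s"
    define P1 where "P1 = blinfun_apply u (x - y) + blinfun_apply (xs - ys) v + A * (t - s)"
    define P2 where "P2 = blinfun_apply u' (x - y) + blinfun_apply (xs - ys) v' + A' * (t - s)"
    have i1: "1 \<le> P1" using s1 hs unfolding P1_def by blast
    have i2: "1 \<le> blinfun_apply u' (x - y) + blinfun_apply (zs - ys) v' + A' * ((r - 1) - s)"
      using s2 hs by blast
    have id2: "blinfun_apply u' (x - y) + blinfun_apply (zs - ys) v' + A' * ((r - 1) - s) = P2 - K"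
      unfolding K_def P2_def by (simp add: blinfun.bilinear_simps algebra_simps)
    have m2: "mu * (1 + K) \<le> mu * P2" using i2 id2 mu by (intro mult_left_mono) auto
    have "- \<bar>1 + K\<bar> \<le> 1 + K" by simp
    then have "mu * (- \<bar>1 + K\<bar>) \<le> mu * (1 + K)" using mu by (intro mult_left_mono) auto
    then have m3: "- (1 / 2) \<le> mu * (1 + K)" using muK by simp
    define Q where "Q = blinfun_apply U (x - y) + blinfun_apply (xs - ys) w - t + s"
    have "lam * Q = P1 + mu * P2"
    proof -
      have "lam * Q = lam * (1 / lam) * (blinfun_apply u (x - y) + mu * blinfun_apply u' (x - y))
          + lam * (1 / lam) * (blinfun_apply (xs - ys) v + mu * blinfun_apply (xs - ys) v') - lam * (t - s)"
        unfolding Q_def U_def w_def by (simp add: blinfun.bilinear_simps algebra_simps)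
      also have "\<dots> = (blinfun_apply u (x - y) + mu * blinfun_apply u' (x - y))
          + (blinfun_apply (xs - ys) v + mu * blinfun_apply (xs - ys) v') - lam * (t - s)"
        using lam by simp
      also have "\<dots> = P1 + mu * P2" unfolding P1_def P2_def lam_def by (simp add: algebra_simps)
      finally show ?thesis .
    qed
    then have "0 < lam * Q" using i1 m2 m3 by linarith
    then show "0 < blinfun_apply U (x - y) + blinfun_apply (xs - ys) w - t + s"
      using lam unfolding Q_def by (simp add: zero_less_mult_iff)
  qed
qed



lemma lip_claim:
  fixes h :: "'a::real_normed_vector \<times> ('a \<Rightarrow>\<^sub>L real) \<Rightarrow> ereal"
  assumes mm: "maximal_monotone T" and hF: "h \<in> fitz_family T" and lsc: "lsc_wrt strong_weak_star h"
    and R: "\<And>y ys. (y, ys) \<in> T \<Longrightarrow> norm y \<le> R" and fin: "h (x, zs) = ereal r"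
  shows "h (x, xs) \<le> ereal (r + R * norm (xs - zs))"
proof (rule ccontr)
  assume "\<not> h (x, xs) \<le> ereal (r + R * norm (xs - zs))"
  then have "ereal (r + R * norm (xs - zs)) < h (x, xs)" by simp
  then obtain t where t1: "ereal (r + R * norm (xs - zs)) < ereal t" and t2: "ereal t < h (x, xs)"
    using ereal_dense2 by blast
  have cv: "ereal_convex h" and eqT: "\<And>y ys. (y, ys) \<in> T \<Longrightarrow> h (y, ys) = ereal (pairing y ys)"
    using hF unfolding fitz_family_def by auto
  obtain U w where sep: "\<forall>y ys s. h (y, ys) \<le> ereal s \<longrightarrow>
      0 < blinfun_apply U (x - y) + blinfun_apply (xs - ys) w - t + s"
    using nonvert_sep[OF lsc cv fin t2] by blast
  have E1: "0 < blinfun_apply (xs - zs) w - t + r"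
    using sep[rule_format, of x zs r] fin by (simp add: blinfun.bilinear_simps)
  have E2: "0 < blinfun_apply U (x - y) + blinfun_apply (xs - ys) w - t + blinfun_apply ys y"
    if yT: "(y, ys) \<in> T" for y ys
    using sep[rule_format, of y ys "blinfun_apply ys y"] eqT[OF yT] by (simp add: pairing_def)
  have nw: "norm w \<le> R"
  proof (rule ccontr)
    assume "\<not> norm w \<le> R"
    then have wR: "norm w - R > 0" by simp
    obtain gm :: "'a \<Rightarrow>\<^sub>L real" where gm: "norm gm \<le> 1" "blinfun_apply gm w = norm w"
      using norming by blast
    define C where "C = blinfun_apply U w - blinfun_apply U x - blinfun_apply xs w + t"
    define sg where "sg = (\<bar>C\<bar> + 1) / (norm w - R)"
    have sg: "sg > 0" unfolding sg_def using wR by (simp add: add_nonneg_pos)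
    have sgR: "sg * (norm w - R) = \<bar>C\<bar> + 1" unfolding sg_def using wR by simp
    have "(w, U + sg *\<^sub>R gm) \<in> T"
    proof (rule max_mono_add[OF mm])
      fix y ys assume yT: "(y, ys) \<in> T"
      have e2: "0 < blinfun_apply U x - blinfun_apply U y + blinfun_apply xs w - blinfun_apply ys w - t + blinfun_apply ys y"
        using E2[OF yT] by (simp add: blinfun.bilinear_simps)
      have "blinfun_apply gm y \<le> norm gm * norm y" using norm_blinfun[of gm y] by simp
      also have "\<dots> \<le> 1 * norm y" by (rule mult_right_mono[OF gm(1)]) simp
      also have "\<dots> \<le> R" using R[OF yT] by simp
      finally have gy: "blinfun_apply gm y \<le> R" .
      have sgy: "sg * blinfun_apply gm y \<le> sg * R" using gy sg by (intro mult_left_mono) auto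
      have "pairing (w - y) (U + sg *\<^sub>R gm - ys) = blinfun_apply U w - blinfun_apply U y
          + sg * norm w - sg * blinfun_apply gm y - blinfun_apply ys w + blinfun_apply ys y"
        unfolding pairing_def using gm(2) by (simp add: blinfun.bilinear_simps algebra_simps)
      moreover have "sg * norm w - sg * R = \<bar>C\<bar> + 1" using sgR by (simp add: algebra_simps)
      moreover have "- \<bar>C\<bar> \<le> C" by simp
      ultimately show "0 \<le> pairing (w - y) (U + sg *\<^sub>R gm - ys)" using e2 sgy unfolding C_def by linarith
    qed
    then have "norm w \<le> R" by (rule R)
    then show False using wR by simp
  qed
  have "blinfun_apply (xs - zs) w \<le> norm (xs - zs) * norm w"
    using norm_blinfun[of "xs - zs" w] by simp
  also have "\<dots> \<le> norm (xs - zs) * R" using nw by (intro mult_left_mono) auto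
  finally have "blinfun_apply (xs - zs) w \<le> R * norm (xs - zs)" by (simp add: mult.commute)
  moreover have "r + R * norm (xs - zs) < t" using t1 by simp
  ultimately show False using E1 by linarith
qed

lemma bdd_dom_R:
  assumes "bounded (dom_op T)"
  shows "\<exists>R\<ge>0. \<forall>y ys. (y, ys) \<in> T \<longrightarrow> norm y \<le> R"
proof -
  obtain a where a: "\<forall>x\<in>dom_op T. norm x \<le> a" using assms unfolding bounded_iff by blast
  show ?thesis
  proof (intro exI[of _ "max a 0"] conjI allI impI)
    fix y ys assume "(y, ys) \<in> T"
    then have "y \<in> dom_op T" unfolding dom_op_def by force
    then show "norm y \<le> max a 0" using a by fastforce
  qed simp
qed

lemma R_bdd_dom:
  assumes "\<And>y ys. (y, ys) \<in> T \<Longrightarrow> norm y \<le> R"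
  shows "bounded (dom_op T)"
  unfolding bounded_iff dom_op_def using assms by (intro exI[of _ R]) auto

lemma family_finite:
  assumes "h \<in> fitz_family T" "h (x, xs) < \<infinity>"
  shows "\<exists>r. h (x, xs) = ereal r"
proof -
  have "ereal (pairing x xs) \<le> h (x, xs)" using assms(1) unfolding fitz_family_def by auto
  then have "h (x, xs) \<noteq> - \<infinity>" by auto
  then show ?thesis using assms(2) by (cases "h (x, xs)") auto
qed

lemma dom_sub:
  assumes "h \<in> fitz_family T"
  shows "dom_op T \<subseteq> fst ` dom_fun h"
proof
  fix y assume "y \<in> dom_op T"
  then obtain ys where yT: "(y, ys) \<in> T" unfolding dom_op_def by force
  then have "h (y, ys) = ereal (pairing y ys)" using assms unfolding fitz_family_def by auto
  then have "(y, ys) \<in> dom_fun h" unfolding dom_fun_def by simp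
  then show "y \<in> fst ` dom_fun h" by force
qed

lemma P1_bound:
  assumes mm: "maximal_monotone T" and hF: "h \<in> fitz_family T"
    and R0: "\<forall>y ys. (y, ys) \<in> T \<longrightarrow> norm y \<le> R" and fin: "h (x, zs) < \<infinity>"
  shows "norm x \<le> R"
proof (rule ccontr)
  have R: "\<And>y ys. (y, ys) \<in> T \<Longrightarrow> norm y \<le> R" using R0 by blast
  assume "\<not> norm x \<le> R"
  then have xR: "norm x - R > 0" by simp
  obtain r where r: "h (x, zs) = ereal r" using family_finite[OF hF fin] by blast
  obtain gm :: "'a \<Rightarrow>\<^sub>L real" where gm: "norm gm \<le> 1" "blinfun_apply gm x = norm x"
    using norming by blast
  define sg where "sg = (\<bar>r - blinfun_apply zs x\<bar> + 1) / (norm x - R)"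
  have sg: "sg > 0" unfolding sg_def using xR by (simp add: add_nonneg_pos)
  have sgR: "sg * (norm x - R) = \<bar>r - blinfun_apply zs x\<bar> + 1" unfolding sg_def using xR by simp
  have "(x, zs + sg *\<^sub>R gm) \<in> T"
  proof (rule max_mono_add[OF mm])
    fix y ys assume yT: "(y, ys) \<in> T"
    have "ereal (blinfun_apply zs y + blinfun_apply ys x - blinfun_apply ys y) \<le> h (x, zs)"
      by (rule family_ge_fitz_term[OF hF yT])
    then have t: "blinfun_apply zs y + blinfun_apply ys x - blinfun_apply ys y \<le> r" using r by simp
    have "blinfun_apply gm y \<le> norm gm * norm y" using norm_blinfun[of gm y] by simp
    also have "\<dots> \<le> 1 * norm y" by (rule mult_right_mono[OF gm(1)]) simp
    also have "\<dots> \<le> R" using R[OF yT] by simp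
    finally have gy: "blinfun_apply gm y \<le> R" .
    have sgy: "sg * blinfun_apply gm y \<le> sg * R" using gy sg by (intro mult_left_mono) auto
    have "pairing (x - y) (zs + sg *\<^sub>R gm - ys) = blinfun_apply zs x + sg * norm x - blinfun_apply ys x
        - blinfun_apply zs y - sg * blinfun_apply gm y + blinfun_apply ys y"
      unfolding pairing_def using gm(2) by (simp add: blinfun.bilinear_simps algebra_simps)
    moreover have "sg * norm x - sg * R = \<bar>r - blinfun_apply zs x\<bar> + 1" using sgR by (simp add: algebra_simps)
    moreover have "r - blinfun_apply zs x \<le> \<bar>r - blinfun_apply zs x\<bar>" by simp
    ultimately show "0 \<le> pairing (x - y) (zs + sg *\<^sub>R gm - ys)" using t sgy by linarith
  qed
  then have "norm x \<le> R" by (rule R)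
  then show False using xR by simp
qed

lemma lip4:
  assumes mm: "maximal_monotone T" and hF: "h \<in> fitz_family T" and lsc: "lsc_wrt strong_weak_star h"
    and R0: "\<forall>y ys. (y, ys) \<in> T \<longrightarrow> norm y \<le> R" and x: "x \<in> fst ` dom_fun h"
  shows "(\<forall>xs. \<bar>h (x, xs)\<bar> \<noteq> \<infinity>) \<and>
    (\<forall>xs zs. \<bar>real_of_ereal (h (x, xs)) - real_of_ereal (h (x, zs))\<bar> \<le> R * norm (xs - zs))"
proof -
  have R: "\<And>y ys. (y, ys) \<in> T \<Longrightarrow> norm y \<le> R" using R0 by blast
  obtain z0 where "(x, z0) \<in> dom_fun h" using x by force
  then have "h (x, z0) < \<infinity>" unfolding dom_fun_def by simp
  then obtain r0 where r0: "h (x, z0) = ereal r0" using family_finite[OF hF] by blast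
  have finv: "\<exists>a. h (x, xs) = ereal a" for xs
  proof -
    have "h (x, xs) \<le> ereal (r0 + R * norm (xs - z0))" by (rule lip_claim[OF mm hF lsc R r0])
    moreover have "ereal (r0 + R * norm (xs - z0)) < \<infinity>" by simp
    ultimately have "h (x, xs) < \<infinity>" by (rule le_less_trans)
    then show ?thesis using family_finite[OF hF] by blast
  qed
  have 1: "\<forall>xs. \<bar>h (x, xs)\<bar> \<noteq> \<infinity>"
  proof
    fix xs obtain a where "h (x, xs) = ereal a" using finv by blast
    then show "\<bar>h (x, xs)\<bar> \<noteq> \<infinity>" by simp
  qed
  have 2: "\<bar>real_of_ereal (h (x, xs)) - real_of_ereal (h (x, zs))\<bar> \<le> R * norm (xs - zs)" for xs zs
  proof -
    obtain a where a: "h (x, xs) = ereal a" using finv by blast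
    obtain b where b: "h (x, zs) = ereal b" using finv by blast
    have "h (x, xs) \<le> ereal (b + R * norm (xs - zs))" by (rule lip_claim[OF mm hF lsc R b])
    then have ab: "a \<le> b + R * norm (xs - zs)" using a by simp
    have "h (x, zs) \<le> ereal (a + R * norm (zs - xs))" by (rule lip_claim[OF mm hF lsc R a])
    then have ba: "b \<le> a + R * norm (xs - zs)" using b by (simp add: norm_minus_commute)
    show ?thesis using a b ab ba by (simp add: abs_le_iff)
  qed
  show ?thesis using 1 2 by blast
qed

lemma lip_to_bound:
  assumes hF: "h \<in> fitz_family T"
    and fin: "\<forall>x\<in>fst ` dom_fun h. \<forall>xs. \<bar>h (x, xs)\<bar> \<noteq> \<infinity>"
    and lip: "\<forall>x\<in>fst ` dom_fun h. \<forall>xs zs. \<bar>real_of_ereal (h (x, xs)) - real_of_ereal (h (x, zs))\<bar> \<le> L * norm (xs - zs)"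
    and L: "0 \<le> L" and yT: "(y, ys) \<in> T"
  shows "norm y \<le> L"
proof -
  have yd: "y \<in> fst ` dom_fun h" using dom_sub[OF hF] yT unfolding dom_op_def by force
  obtain gm :: "'a \<Rightarrow>\<^sub>L real" where gm: "norm gm \<le> 1" "blinfun_apply gm y = norm y"
    using norming by blast
  have hT: "h (y, ys) = ereal (blinfun_apply ys y)" using hF yT unfolding fitz_family_def pairing_def by auto
  have "\<bar>h (y, ys + gm)\<bar> \<noteq> \<infinity>" using fin[rule_format, OF yd] .
  then obtain a where a: "h (y, ys + gm) = ereal a" by (cases "h (y, ys + gm)") auto
  have "ereal (pairing y (ys + gm)) \<le> h (y, ys + gm)" using hF unfolding fitz_family_def by auto
  then have ge: "blinfun_apply ys y + norm y \<le> a" using a gm(2) by (simp add: pairing_def blinfun.bilinear_simps)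
  have "\<bar>real_of_ereal (h (y, ys + gm)) - real_of_ereal (h (y, ys))\<bar> \<le> L * norm ((ys + gm) - ys)"
    using lip yd by blast
  then have "\<bar>a - blinfun_apply ys y\<bar> \<le> L * norm gm" using a hT by simp
  also have "\<dots> \<le> L * 1" using gm(1) L by (intro mult_left_mono) auto
  finally have "a - blinfun_apply ys y \<le> L" by (simp add: abs_le_iff)
  then show ?thesis using ge by linarith
qed

theorem lemma4p5:
  fixes T :: "('a::banach \<times> ('a \<Rightarrow>\<^sub>L real)) set"
  assumes "maximal_monotone T"
  shows "(bounded (dom_op T) \<longleftrightarrow>
            (\<forall>h\<in>fitz_family T. bounded (fst ` dom_fun h)))
       \<and> (bounded (dom_op T) \<longleftrightarrow>
            (\<exists>h\<in>fitz_family T. bounded (fst ` dom_fun h)))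
       \<and> (bounded (dom_op T) \<longleftrightarrow>
            ((\<forall>h\<in>fitz_family T. lsc_wrt strong_weak_star h \<longrightarrow>
                (\<forall>x\<in>fst ` dom_fun h. \<forall>xs. \<bar>h (x, xs)\<bar> \<noteq> \<infinity>))
             \<and> (\<exists>L::real. 0 \<le> L \<and>
                (\<forall>h\<in>fitz_family T. lsc_wrt strong_weak_star h \<longrightarrow>
                  (\<forall>x\<in>fst ` dom_fun h. \<forall>xs zs.
                     \<bar>real_of_ereal (h (x, xs)) - real_of_ereal (h (x, zs))\<bar>
                       \<le> L * norm (xs - zs))))))
       \<and> (bounded (dom_op T) \<longleftrightarrow>
            (\<exists>h\<in>fitz_family T. lsc_wrt strong_weak_star h \<and>
                (\<forall>x\<in>fst ` dom_fun h. \<forall>xs. \<bar>h (x, xs)\<bar> \<noteq> \<infinity>)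
              \<and> (\<exists>L::real. 0 \<le> L \<and>
                  (\<forall>x\<in>fst ` dom_fun h. \<forall>xs zs.
                     \<bar>real_of_ereal (h (x, xs)) - real_of_ereal (h (x, zs))\<bar>
                       \<le> L * norm (xs - zs)))))"
proof -
  note mm = assms
  have fF: "fitz T \<in> fitz_family T" by (rule fitz_family_fitz[OF mm])
  have fl: "lsc_wrt strong_weak_star (fitz T)" by (rule fitz_lsc)
  have b31: "bounded (dom_op T)" if "h \<in> fitz_family T" "bounded (fst ` dom_fun h)" for h
    using bounded_subset[OF that(2) dom_sub[OF that(1)]] .
  have b12: "bounded (fst ` dom_fun h)" if B: "bounded (dom_op T)" and hF: "h \<in> fitz_family T" for h
  proof -
    obtain R where R: "R \<ge> 0" "\<forall>y ys. (y, ys) \<in> T \<longrightarrow> norm y \<le> R" using bdd_dom_R[OF B] by blast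
    have "\<forall>x\<in>fst ` dom_fun h. norm x \<le> R"
    proof
      fix x assume "x \<in> fst ` dom_fun h"
      then obtain zs where "(x, zs) \<in> dom_fun h" by force
      then have "h (x, zs) < \<infinity>" unfolding dom_fun_def by simp
      then show "norm x \<le> R" by (rule P1_bound[OF mm hF R(2)])
    qed
    then show ?thesis unfolding bounded_iff by (rule exI[of _ R])
  qed
  have b14: "(\<forall>h\<in>fitz_family T. lsc_wrt strong_weak_star h \<longrightarrow>
                (\<forall>x\<in>fst ` dom_fun h. \<forall>xs. \<bar>h (x, xs)\<bar> \<noteq> \<infinity>))
             \<and> (\<exists>L::real. 0 \<le> L \<and>
                (\<forall>h\<in>fitz_family T. lsc_wrt strong_weak_star h \<longrightarrow>
                  (\<forall>x\<in>fst ` dom_fun h. \<forall>xs zs.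
                     \<bar>real_of_ereal (h (x, xs)) - real_of_ereal (h (x, zs))\<bar>
                       \<le> L * norm (xs - zs))))" if B: "bounded (dom_op T)"
  proof -
    obtain R where R: "R \<ge> 0" "\<forall>y ys. (y, ys) \<in> T \<longrightarrow> norm y \<le> R" using bdd_dom_R[OF B] by blast
    have Ri: "\<And>y ys. (y, ys) \<in> T \<Longrightarrow> norm y \<le> R" using R(2) by blast
    show ?thesis
    proof (intro conjI ballI impI exI[of _ R] allI)
      fix h x xs assume hF: "h \<in> fitz_family T" and hl: "lsc_wrt strong_weak_star h" and hx: "x \<in> fst ` dom_fun h"
      show "\<bar>h (x, xs)\<bar> \<noteq> \<infinity>" by (rule spec[OF conjunct1[OF lip4[OF mm hF hl R(2) hx]]])
    next
      show "0 \<le> R" by (rule R(1))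
    next
      fix h x xs zs assume hF: "h \<in> fitz_family T" and hl: "lsc_wrt strong_weak_star h" and hx: "x \<in> fst ` dom_fun h"
      show "\<bar>real_of_ereal (h (x, xs)) - real_of_ereal (h (x, zs))\<bar> \<le> R * norm (xs - zs)"
        by (rule spec[OF spec[OF conjunct2[OF lip4[OF mm hF hl R(2) hx]]]])
    qed
  qed
  have b51: "bounded (dom_op T)" if "h \<in> fitz_family T"
      "\<forall>x\<in>fst ` dom_fun h. \<forall>xs. \<bar>h (x, xs)\<bar> \<noteq> \<infinity>"
      "0 \<le> L" "\<forall>x\<in>fst ` dom_fun h. \<forall>xs zs.
                     \<bar>real_of_ereal (h (x, xs)) - real_of_ereal (h (x, zs))\<bar> \<le> L * norm (xs - zs)" for h L
    by (rule R_bdd_dom[of T L]) (rule lip_to_bound[OF that(1) that(2) that(4) that(3)])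
  have i1: "(bounded (dom_op T) \<longleftrightarrow>
            (\<forall>h\<in>fitz_family T. bounded (fst ` dom_fun h)))"
  proof (rule iffI)
    assume B: "bounded (dom_op T)"
    show "\<forall>h\<in>fitz_family T. bounded (fst ` dom_fun h)"
    proof
      fix h assume "h \<in> fitz_family T" then show "bounded (fst ` dom_fun h)" by (rule b12[OF B])
    qed
  next
    assume A: "\<forall>h\<in>fitz_family T. bounded (fst ` dom_fun h)"
    show "bounded (dom_op T)" by (rule b31[OF fF bspec[OF A fF]])
  qed
  have i2: "(bounded (dom_op T) \<longleftrightarrow>
            (\<exists>h\<in>fitz_family T. bounded (fst ` dom_fun h)))"
  proof (rule iffI)
    assume B: "bounded (dom_op T)"
    show "\<exists>h\<in>fitz_family T. bounded (fst ` dom_fun h)" using b12[OF B fF] fF by (rule bexI[where x="fitz T"])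
  next
    assume "\<exists>h\<in>fitz_family T. bounded (fst ` dom_fun h)"
    then obtain h where "h \<in> fitz_family T" "bounded (fst ` dom_fun h)" ..
    then show "bounded (dom_op T)" by (rule b31)
  qed
  have i3: "(bounded (dom_op T) \<longleftrightarrow>
            ((\<forall>h\<in>fitz_family T. lsc_wrt strong_weak_star h \<longrightarrow>
                (\<forall>x\<in>fst ` dom_fun h. \<forall>xs. \<bar>h (x, xs)\<bar> \<noteq> \<infinity>))
             \<and> (\<exists>L::real. 0 \<le> L \<and>
                (\<forall>h\<in>fitz_family T. lsc_wrt strong_weak_star h \<longrightarrow>
                  (\<forall>x\<in>fst ` dom_fun h. \<forall>xs zs.
                     \<bar>real_of_ereal (h (x, xs)) - real_of_ereal (h (x, zs))\<bar>
                       \<le> L * norm (xs - zs))))))"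
  proof (rule iffI)
    assume "bounded (dom_op T)" then show "(\<forall>h\<in>fitz_family T. lsc_wrt strong_weak_star h \<longrightarrow>
                (\<forall>x\<in>fst ` dom_fun h. \<forall>xs. \<bar>h (x, xs)\<bar> \<noteq> \<infinity>))
             \<and> (\<exists>L::real. 0 \<le> L \<and>
                (\<forall>h\<in>fitz_family T. lsc_wrt strong_weak_star h \<longrightarrow>
                  (\<forall>x\<in>fst ` dom_fun h. \<forall>xs zs.
                     \<bar>real_of_ereal (h (x, xs)) - real_of_ereal (h (x, zs))\<bar>
                       \<le> L * norm (xs - zs))))" by (rule b14)
  next
    assume A4: "(\<forall>h\<in>fitz_family T. lsc_wrt strong_weak_star h \<longrightarrow>
                (\<forall>x\<in>fst ` dom_fun h. \<forall>xs. \<bar>h (x, xs)\<bar> \<noteq> \<infinity>))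
             \<and> (\<exists>L::real. 0 \<le> L \<and>
                (\<forall>h\<in>fitz_family T. lsc_wrt strong_weak_star h \<longrightarrow>
                  (\<forall>x\<in>fst ` dom_fun h. \<forall>xs zs.
                     \<bar>real_of_ereal (h (x, xs)) - real_of_ereal (h (x, zs))\<bar>
                       \<le> L * norm (xs - zs))))"
    obtain L where L0: "0 \<le> L \<and> (\<forall>h\<in>fitz_family T. lsc_wrt strong_weak_star h \<longrightarrow>
                  (\<forall>x\<in>fst ` dom_fun h. \<forall>xs zs.
                     \<bar>real_of_ereal (h (x, xs)) - real_of_ereal (h (x, zs))\<bar>
                       \<le> L * norm (xs - zs)))" using conjunct2[OF A4] ..
    note L = conjunct1[OF L0] conjunct2[OF L0]
    have f1: "\<forall>x\<in>fst ` dom_fun (fitz T). \<forall>xs. \<bar>fitz T (x, xs)\<bar> \<noteq> \<infinity>"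
      using mp[OF bspec[OF conjunct1[OF A4] fF] fl] .
    have f2: "\<forall>x\<in>fst ` dom_fun (fitz T). \<forall>xs zs.
                     \<bar>real_of_ereal (fitz T (x, xs)) - real_of_ereal (fitz T (x, zs))\<bar> \<le> L * norm (xs - zs)"
      using mp[OF bspec[OF L(2) fF] fl] .
    show "bounded (dom_op T)" by (rule b51[OF fF f1 L(1) f2])
  qed
  have i4: "(bounded (dom_op T) \<longleftrightarrow>
            (\<exists>h\<in>fitz_family T. lsc_wrt strong_weak_star h \<and>
                (\<forall>x\<in>fst ` dom_fun h. \<forall>xs. \<bar>h (x, xs)\<bar> \<noteq> \<infinity>)
              \<and> (\<exists>L::real. 0 \<le> L \<and>
                  (\<forall>x\<in>fst ` dom_fun h. \<forall>xs zs.
                     \<bar>real_of_ereal (h (x, xs)) - real_of_ereal (h (x, zs))\<bar>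
                       \<le> L * norm (xs - zs)))))"
  proof (rule iffI)
    assume B: "bounded (dom_op T)"
    show "\<exists>h\<in>fitz_family T. lsc_wrt strong_weak_star h \<and>
                (\<forall>x\<in>fst ` dom_fun h. \<forall>xs. \<bar>h (x, xs)\<bar> \<noteq> \<infinity>)
              \<and> (\<exists>L::real. 0 \<le> L \<and>
                  (\<forall>x\<in>fst ` dom_fun h. \<forall>xs zs.
                     \<bar>real_of_ereal (h (x, xs)) - real_of_ereal (h (x, zs))\<bar>
                       \<le> L * norm (xs - zs)))"
    proof (rule bexI[OF _ fF], intro conjI)
      show "lsc_wrt strong_weak_star (fitz T)" by (rule fl)
      show "\<forall>x\<in>fst ` dom_fun (fitz T). \<forall>xs. \<bar>fitz T (x, xs)\<bar> \<noteq> \<infinity>"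
        using mp[OF bspec[OF conjunct1[OF b14[OF B]] fF] fl] .
      obtain L where L0: "0 \<le> L \<and> (\<forall>h\<in>fitz_family T. lsc_wrt strong_weak_star h \<longrightarrow>
                  (\<forall>x\<in>fst ` dom_fun h. \<forall>xs zs.
                     \<bar>real_of_ereal (h (x, xs)) - real_of_ereal (h (x, zs))\<bar>
                       \<le> L * norm (xs - zs)))" using conjunct2[OF b14[OF B]] ..
      show "\<exists>L::real. 0 \<le> L \<and> (\<forall>x\<in>fst ` dom_fun (fitz T). \<forall>xs zs.
                     \<bar>real_of_ereal (fitz T (x, xs)) - real_of_ereal (fitz T (x, zs))\<bar>
                       \<le> L * norm (xs - zs))"
        using conjI[OF conjunct1[OF L0] mp[OF bspec[OF conjunct2[OF L0] fF] fl]] by (rule exI)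
    qed
  next
    assume "\<exists>h\<in>fitz_family T. lsc_wrt strong_weak_star h \<and>
                (\<forall>x\<in>fst ` dom_fun h. \<forall>xs. \<bar>h (x, xs)\<bar> \<noteq> \<infinity>)
              \<and> (\<exists>L::real. 0 \<le> L \<and>
                  (\<forall>x\<in>fst ` dom_fun h. \<forall>xs zs.
                     \<bar>real_of_ereal (h (x, xs)) - real_of_ereal (h (x, zs))\<bar>
                       \<le> L * norm (xs - zs)))"
    then obtain h where h0: "h \<in> fitz_family T" and h1: "lsc_wrt strong_weak_star h \<and>
                (\<forall>x\<in>fst ` dom_fun h. \<forall>xs. \<bar>h (x, xs)\<bar> \<noteq> \<infinity>)
              \<and> (\<exists>L::real. 0 \<le> L \<and>
                  (\<forall>x\<in>fst ` dom_fun h. \<forall>xs zs.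
                     \<bar>real_of_ereal (h (x, xs)) - real_of_ereal (h (x, zs))\<bar>
                       \<le> L * norm (xs - zs)))" ..
    obtain L where L0: "0 \<le> L \<and>
                  (\<forall>x\<in>fst ` dom_fun h. \<forall>xs zs.
                     \<bar>real_of_ereal (h (x, xs)) - real_of_ereal (h (x, zs))\<bar>
                       \<le> L * norm (xs - zs))" using conjunct2[OF conjunct2[OF h1]] ..
    show "bounded (dom_op T)"
      by (rule b51[OF h0 conjunct1[OF conjunct2[OF h1]] conjunct1[OF L0] conjunct2[OF L0]])
  qed
  show ?thesis by (rule conjI[OF i1 conjI[OF i2 conjI[OF i3 i4]]])
qed


end
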